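(* Let $d\geq 2$ and let $n_1\geq n_2\geq\cdots\geq n_d\geq 2$ be integers. Then $\textsc{Grid}(n_1,\ldots,n_d)$ is $Q_d$-supermagic.
   Context: For integers $k\le\ell$, $[k]=\{1,\ldots,k\}$. The grid graph $\textsc{Grid}(n_1,\ldots,n_d)$ has vertex set $V=[n_1]\times\cdots\times[n_d]$ and edge set $E=\{\{\mathbf x,\mathbf y\}: \mathbf x,\mathbf y\in V,\ \sum_{i=1}^d|x_i-y_i|=1\}$. The $d$-cube $Q_d$ is $\textsc{Grid}(2,\ldots,2)$ ($d$ entries). A graph $G$ admits an $H$-covering if every edge of $G$ lies in at least one subgraph of $G$ isomorphic to $H$. A graph $G=(V,E)$ admitting an $H$-covering is $H$-magic if there is a bijection $F:V\cup E\to\{1,\ldots,|V|+|E|\}$ and a constant $c$ such that $\sum_{v\in V(H')}F(v)+\sum_{e\in E(H')}F(e)=c$ for every subgraph $H'\subseteq G$ isomorphic to $H$; it is $H$-supermagic if moreover such an $F$ can be chosen with $F(V)=\{1,\ldots,|V|\}$. *)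

theory Defs
  imports Main
begin

text \<open>A (simple) graph is a pair (V, E) of a vertex set and a set of 2-element edges.\<close>
type_synonym 'a graph = "'a set \<times> 'a set set"

definition verts :: "'a graph \<Rightarrow> 'a set" where "verts G = fst G"
definition edges :: "'a graph \<Rightarrow> 'a set set" where "edges G = snd G"

definition grid_verts :: "nat list \<Rightarrow> nat list set" where
  "grid_verts ns = {x. length x = length ns \<and> (\<forall>i<length ns. 1 \<le> x ! i \<and> x ! i \<le> ns ! i)}"

definition grid_edges :: "nat list \<Rightarrow> nat list set set" where
  "grid_edges ns = {{x, y} | x y. x \<in> grid_verts ns \<and> y \<in> grid_verts ns \<and>
      (\<Sum>i<length ns. nat \<bar>int (x ! i) - int (y ! i)\<bar>) = 1}"

definition grid :: "nat list \<Rightarrow> nat list graph" where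
  "grid ns = (grid_verts ns, grid_edges ns)"

definition cube :: "nat \<Rightarrow> nat list graph" where
  "cube d = grid (replicate d 2)"

definition subgraph :: "'a graph \<Rightarrow> 'a graph \<Rightarrow> bool" where
  "subgraph S G \<longleftrightarrow> verts S \<subseteq> verts G \<and> edges S \<subseteq> edges G \<and> (\<forall>e\<in>edges S. e \<subseteq> verts S)"

definition graph_iso :: "'a graph \<Rightarrow> 'b graph \<Rightarrow> bool" where
  "graph_iso G H \<longleftrightarrow> (\<exists>f. bij_betw f (verts G) (verts H) \<and> (\<lambda>e. f ` e) ` edges G = edges H)"

definition copies :: "'a graph \<Rightarrow> 'b graph \<Rightarrow> 'a graph set" where
  "copies G H = {S. subgraph S G \<and> graph_iso S H}"

definition H_covering :: "'a graph \<Rightarrow> 'b graph \<Rightarrow> bool" where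
  "H_covering G H \<longleftrightarrow> (\<forall>e\<in>edges G. \<exists>S\<in>copies G H. e \<in> edges S)"

definition magic_labelling :: "'a graph \<Rightarrow> 'b graph \<Rightarrow> ('a + 'a set \<Rightarrow> nat) \<Rightarrow> bool" where
  "magic_labelling G H F \<longleftrightarrow>
     bij_betw F (Inl ` verts G \<union> Inr ` edges G) {1..card (verts G) + card (edges G)} \<and>
     (\<exists>c. \<forall>S\<in>copies G H. (\<Sum>v\<in>verts S. F (Inl v)) + (\<Sum>e\<in>edges S. F (Inr e)) = c)"

definition H_magic :: "'a graph \<Rightarrow> 'b graph \<Rightarrow> bool" where
  "H_magic G H \<longleftrightarrow> H_covering G H \<and> (\<exists>F. magic_labelling G H F)"

definition H_supermagic :: "'a graph \<Rightarrow> 'b graph \<Rightarrow> bool" where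
  "H_supermagic G H \<longleftrightarrow> H_covering G H \<and>
     (\<exists>F. magic_labelling G H F \<and> F ` Inl ` verts G = {1..card (verts G)})"

end

theory Submission
  imports Defs
begin


lemma sum_pair_const:
  fixes g :: "'a \<Rightarrow> int"
  assumes "bij_betw t C C" "\<And>y. y \<in> C \<Longrightarrow> g y + g (t y) = K"
  shows "2 * sum g C = int (card C) * K"
proof -
  have "sum (\<lambda>y. g (t y)) C = sum g C" using sum.reindex_bij_betw[OF assms(1), of g] by simp
  hence "2 * sum g C = sum g C + sum (\<lambda>y. g (t y)) C" by simp
  also have "\<dots> = sum (\<lambda>y. g y + g (t y)) C" by (simp add: sum.distrib)
  also have "\<dots> = sum (\<lambda>y. K) C" using assms(2) by (intro sum.cong) auto
  finally show ?thesis by simp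
qed

lemma gv_len: "x \<in> grid_verts m \<Longrightarrow> length x = length m" by (simp add: grid_verts_def)
lemma gv_nth: "x \<in> grid_verts m \<Longrightarrow> i < length m \<Longrightarrow> 1 \<le> x!i \<and> x!i \<le> m!i" by (simp add: grid_verts_def)
lemma gv_I: "length x = length m \<Longrightarrow> (\<And>i. i < length m \<Longrightarrow> 1 \<le> x!i \<and> x!i \<le> m!i) \<Longrightarrow> x \<in> grid_verts m"
  by (simp add: grid_verts_def)

lemma gv_finite: "finite (grid_verts m)"
proof -
  have "grid_verts m \<subseteq> {xs. set xs \<subseteq> {0..Max (set m)} \<and> length xs = length m}"
  proof
    fix x assume x: "x \<in> grid_verts m"
    have "v \<in> {0..Max (set m)}" if "v \<in> set x" for v
    proof -
      obtain i where i: "i < length x" "x!i = v" using \<open>v \<in> set x\<close> by (auto simp: in_set_conv_nth)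
      with x have "v \<le> m!i" "i < length m" by (auto simp: grid_verts_def)
      moreover have "m!i \<le> Max (set m)" using \<open>i < length m\<close> by (intro Max_ge) auto
      ultimately have "v \<le> Max (set m)" by linarith
      then show ?thesis by simp
    qed
    with x show "x \<in> {xs. set xs \<subseteq> {0..Max (set m)} \<and> length xs = length m}"
      by (auto simp: grid_verts_def)
  qed
  moreover have "finite {xs. set xs \<subseteq> {0..Max (set m)} \<and> length xs = length m}"
    by (rule finite_lists_length_eq) simp
  ultimately show ?thesis by (rule finite_subset)
qed

lemma gv_split:
  assumes "j < length m"
  shows "bij_betw (\<lambda>x. (x!j, x[j:=1])) (grid_verts m) ({1..m!j} \<times> grid_verts (m[j:=1]))"
proof (rule bij_betw_byWitness[where f' = "\<lambda>(c,y). y[j:=c]"])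
  show "\<forall>a\<in>grid_verts m. (\<lambda>(c,y). y[j:=c]) (a!j, a[j:=1]) = a" by auto
  show "\<forall>a'\<in>{1..m!j} \<times> grid_verts (m[j:=1]). (\<lambda>x. (x!j, x[j:=1])) ((\<lambda>(c,y). y[j:=c]) a') = a'"
  proof
    fix a' assume a': "a' \<in> {1..m!j} \<times> grid_verts (m[j:=1])"
    then obtain c y where cy: "a' = (c,y)" "y \<in> grid_verts (m[j:=1])" by auto
    then have ly: "length y = length m" by (simp add: grid_verts_def)
    from gv_nth[OF cy(2), of j] assms have "y!j = 1" by simp
    then have "y[j:=1] = y" by (metis list_update_id)
    then show "(\<lambda>x. (x!j, x[j:=1])) ((\<lambda>(c,y). y[j:=c]) a') = a'" using cy ly assms by simp
  qed
  show "(\<lambda>x. (x!j, x[j:=1])) ` grid_verts m \<subseteq> {1..m!j} \<times> grid_verts (m[j:=1])"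
    using assms by (auto simp: grid_verts_def nth_list_update)
  show "(\<lambda>(c,y). y[j:=c]) ` ({1..m!j} \<times> grid_verts (m[j:=1])) \<subseteq> grid_verts m"
    using assms by (auto simp: grid_verts_def nth_list_update)
qed

lemma gv_card_split:
  assumes "j < length m"
  shows "card (grid_verts m) = m!j * card (grid_verts (m[j:=1]))"
  using bij_betw_same_card[OF gv_split[OF assms]] by (simp add: card_cartesian_product)

lemma bij_lin:
  fixes \<beta> :: "'w \<Rightarrow> nat" and K P :: nat
  assumes "bij_betw \<beta> W {0..<P}" "K > 0"
  shows "bij_betw (\<lambda>(a,w). (a - 1) + K * \<beta> w) ({1..K} \<times> W) {0..<K*P}"
proof -
  have inj: "inj_on (\<lambda>(a,w). (a - 1) + K * \<beta> w) ({1..K} \<times> W)"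
  proof (rule inj_onI)
    fix x y assume hx: "x \<in> {1..K} \<times> W" "y \<in> {1..K} \<times> W"
      "(\<lambda>(a,w). (a - 1) + K * \<beta> w) x = (\<lambda>(a,w). (a - 1) + K * \<beta> w) y"
    obtain a w a' w' where xy: "x = (a,w)" "y = (a',w')" by fastforce
    have h: "a \<in> {1..K}" "w \<in> W" "a' \<in> {1..K}" "w' \<in> W"
      "a - 1 + K * \<beta> w = a' - 1 + K * \<beta> w'" using hx xy by auto
    have x1: "a - 1 < K" "a' - 1 < K" using h by auto
    have e: "(a - 1) + K * \<beta> w = (a' - 1) + K * \<beta> w'" using h by simp
    have m1: "((a - 1) + K * \<beta> w) mod K = a - 1" "((a' - 1) + K * \<beta> w') mod K = a' - 1"
      using x1 by simp_all
    hence "a - 1 = a' - 1" using e by metis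
    hence "a = a'" using h by auto
    moreover have d1: "((a - 1) + K * \<beta> w) div K = \<beta> w" "((a' - 1) + K * \<beta> w') div K = \<beta> w'"
      using x1 by simp_all
    hence "\<beta> w = \<beta> w'" using e by metis
    hence "w = w'" using assms(1) h by (auto simp: bij_betw_def inj_on_def)
    ultimately show "x = y" using xy by simp
  qed
  have sub: "(\<lambda>(a,w). (a - 1) + K * \<beta> w) ` ({1..K} \<times> W) \<subseteq> {0..<K*P}"
  proof clarify
    fix a :: nat and w assume h: "a \<in> {1..K}" "w \<in> W"
    have "\<beta> w < P" using assms(1) h by (auto simp: bij_betw_def)
    hence "\<beta> w + 1 \<le> P" by simp
    hence "K * (\<beta> w + 1) \<le> K * P" by (rule mult_left_mono) simp
    hence "K + K * \<beta> w \<le> K * P" by (simp add: algebra_simps)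
    moreover have "a - 1 < K" using h by auto
    ultimately show "a - 1 + K * \<beta> w \<in> {0..<K*P}" by simp
  qed
  have fin: "finite W" using assms(1) bij_betw_finite by blast
  have "card ({1..K} \<times> W) = K * P" using assms(1) fin
    by (simp add: card_cartesian_product bij_betw_same_card)
  then have "card ((\<lambda>(a,w). (a - 1) + K * \<beta> w) ` ({1..K} \<times> W)) = card {0..<K*P}"
    using card_image[OF inj] by simp
  then have "(\<lambda>(a,w). (a - 1) + K * \<beta> w) ` ({1..K} \<times> W) = {0..<K*P}"
    using sub by (intro card_subset_eq) auto
  then show ?thesis using inj by (simp add: bij_betw_def)
qed


definition sgnl :: "nat \<Rightarrow> int" where "sgnl x = (if even x then 1 else -1)"

lemma sgnl_add: "sgnl (a + b) = sgnl a * sgnl b" by (auto simp: sgnl_def)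
lemma sgnl_Suc: "sgnl (Suc a) = - sgnl a" by (auto simp: sgnl_def)
lemma sgnl_abs: "\<bar>sgnl a * x\<bar> = \<bar>x\<bar>" by (auto simp: sgnl_def)
lemma sgnl_sq: "sgnl a * sgnl a = 1" by (auto simp: sgnl_def)

definition Bv :: "nat \<Rightarrow> nat \<Rightarrow> nat \<Rightarrow> int" where
  "Bv n N' r = (if even N' then 2 * int n * int (r div 2) + int n else 2 * int n * int ((r+1) div 2))"

definition core :: "nat \<Rightarrow> nat \<Rightarrow> nat \<Rightarrow> nat \<Rightarrow> int" where
  "core n N' c r = sgnl c * (sgnl r * Bv n N' r) + sgnl r * (sgnl c * (2 * int c - int n - 1))"

definition Aval :: "nat \<Rightarrow> nat \<Rightarrow> nat \<Rightarrow> nat \<Rightarrow> int" where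
  "Aval n N' c r = Bv n N' r + 2 * int c - int n - 1"

lemma core_eq: "core n N' c r = sgnl (c + r) * Aval n N' c r"
  by (simp add: core_def Aval_def sgnl_add algebra_simps)

lemma lin_uniq:
  fixes n t t' c c' :: nat
  assumes "1 \<le> c" "c \<le> n" "1 \<le> c'" "c' \<le> n" "n*t + c = n*t' + c'"
  shows "t = t' \<and> c = c'"
proof -
  have "\<not> t < t'"
  proof
    assume "t < t'" hence "n * (t+1) \<le> n * t'" by (intro mult_le_mono2) simp
    thus False using assms by (simp add: algebra_simps)
  qed
  moreover have "\<not> t' < t"
  proof
    assume "t' < t" hence "n * (t'+1) \<le> n * t" by (intro mult_le_mono2) simp
    thus False using assms by (simp add: algebra_simps)
  qed
  ultimately have "t = t'" by simp
  with assms show ?thesis by simp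
qed

lemma Aval_even_case:
  assumes "even N'"
  shows "Aval n N' c r = 2 * int (n * (r div 2) + c) - 1"
  using assms by (simp add: Aval_def Bv_def algebra_simps)

lemma Aval_odd_case:
  assumes "odd N'"
  shows "Aval n N' c r = 2 * int (n * ((r+1) div 2) + c) - int n - 1"
  using assms by (simp add: Aval_def Bv_def algebra_simps)

lemma h2: "2*(x::int) - 1 = 2*y - 1 \<Longrightarrow> x = y" by simp
lemma h3: "2*(x::int) - k - 1 = 2*y - k - 1 \<Longrightarrow> x = y" by simp
lemma h4: "(a::int) \<ge> k + 1 \<Longrightarrow> 2*a - k - 1 \<ge> k + 1" by simp
lemma pos_helper: "(1::int) \<le> x \<Longrightarrow> 0 < 2*x - 1" by simp

lemma core_inj:
  assumes n: "1 \<le> n" and par: "odd n \<or> even N'"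
  shows "inj_on (\<lambda>(c,r). core n N' c r) ({1..n} \<times> {0..<N'})"
proof (rule inj_onI)
  fix x y assume hx: "x \<in> {1..n} \<times> {0..<N'}" "y \<in> {1..n} \<times> {0..<N'}"
    "(\<lambda>(c,r). core n N' c r) x = (\<lambda>(c,r). core n N' c r) y"
  obtain c r c' r' where xy: "x = (c,r)" "y = (c',r')" by fastforce
  have h: "1 \<le> c" "c \<le> n" "1 \<le> c'" "c' \<le> n" "core n N' c r = core n N' c' r'"
    using hx xy by auto
  have eq: "sgnl (c + r) * Aval n N' c r = sgnl (c' + r') * Aval n N' c' r'"
    using h(5) by (simp add: core_eq)
  have abs_eq: "\<bar>Aval n N' c r\<bar> = \<bar>Aval n N' c' r'\<bar>"
    using arg_cong[OF eq, of abs] by (simp add: sgnl_abs)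
  show "x = y"
  proof (cases "even N'")
    case True
    have "n * (r div 2) + c \<ge> 1" "n * (r' div 2) + c' \<ge> 1" using h by simp_all
    hence "int (n * (r div 2) + c) \<ge> 1" "int (n * (r' div 2) + c') \<ge> 1"
      by (metis of_nat_1 of_nat_le_iff)+
    hence p1: "Aval n N' c r > 0" "Aval n N' c' r' > 0"
      unfolding Aval_even_case[OF True] using pos_helper by blast+
    hence "Aval n N' c r = Aval n N' c' r'" using abs_eq by simp
    hence "int (n * (r div 2) + c) = int (n * (r' div 2) + c')" unfolding Aval_even_case[OF True] using h2 by blast
    hence "n * (r div 2) + c = n * (r' div 2) + c'" by (simp only: of_nat_eq_iff)
    from lin_uniq[OF h(1-4) this] have tc: "r div 2 = r' div 2" "c = c'" by auto
    have "sgnl (c + r) = sgnl (c' + r')" using eq \<open>Aval n N' c r = Aval n N' c' r'\<close> p1 by simp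
    hence "even r = even r'" using tc by (auto simp: sgnl_def split: if_splits)
    hence "r = r'" using tc by (metis div_mult_mod_eq odd_iff_mod_2_eq_one even_iff_mod_2_eq_zero)
    then show ?thesis using xy tc by simp
  next
    case False
    hence nodd: "odd n" using par by simp
    have big: "Aval n N' c r \<ge> int n + 1" if "r \<noteq> 0" "1 \<le> c" for c r
    proof -
      have "(r+1) div 2 \<ge> 1" using that by simp
      hence "n * ((r+1) div 2) \<ge> n" by simp
      hence "n * ((r+1) div 2) + c \<ge> n + 1" using that by linarith
      hence "int (n * ((r+1) div 2) + c) \<ge> int n + 1" by (metis of_nat_1 of_nat_add of_nat_le_iff)
      thus ?thesis unfolding Aval_odd_case[OF False] by (rule h4)
    qed
    have small: "\<bar>Aval n N' c 0\<bar> \<le> int n - 1" if "1 \<le> c" "c \<le> n" for c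
      using that False by (simp add: Aval_odd_case)
    show ?thesis
    proof (cases "r = 0")
      case r0: True
      show ?thesis
      proof (cases "r' = 0")
        case True
        then have "sgnl c * (2 * int c - int n - 1) = sgnl c' * (2 * int c' - int n - 1)"
          using eq r0 False by (simp add: Aval_odd_case)
        hence "c = c'" using nodd by (auto simp: sgnl_def split: if_splits; presburger)
        then show ?thesis using xy r0 True by simp
      next
        case False
        have "\<bar>Aval n N' c' r'\<bar> \<ge> int n + 1" using big[OF False h(3)] by simp
        moreover have "\<bar>Aval n N' c r\<bar> \<le> int n - 1" using small h r0 by simp
        ultimately show ?thesis using abs_eq by simp
      qed
    next
      case r0: False
      show ?thesis
      proof (cases "r' = 0")
        case True
        have "\<bar>Aval n N' c r\<bar> \<ge> int n + 1" using big[OF r0 h(1)] by simp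
        moreover have "\<bar>Aval n N' c' r'\<bar> \<le> int n - 1" using small h True by simp
        ultimately show ?thesis using abs_eq by simp
      next
        case r0': False
        have p1: "Aval n N' c r > 0" "Aval n N' c' r' > 0"
          using big[OF r0 h(1)] big[OF r0' h(3)] by simp_all
        hence A: "Aval n N' c r = Aval n N' c' r'" using abs_eq by simp
        hence "int (n * ((r+1) div 2) + c) = int (n * ((r'+1) div 2) + c')" unfolding Aval_odd_case[OF False] using h3 by blast
        hence "n * ((r+1) div 2) + c = n * ((r'+1) div 2) + c'" by (simp only: of_nat_eq_iff)
        from lin_uniq[OF h(1-4) this] have tc: "(r+1) div 2 = (r'+1) div 2" "c = c'" by auto
        have "sgnl (c + r) = sgnl (c' + r')" using eq A p1 by simp
        hence "even r = even r'" using tc by (auto simp: sgnl_def split: if_splits)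
        hence "r = r'" using tc by presburger
        then show ?thesis using xy tc by simp
      qed
    qed
  qed
qed


lemma sgnl_even: "even (sgnl a * x + y) = even (x + y)"
  by (simp add: sgnl_def even_add)

lemma n2i: "2*X \<le> (M::nat) \<Longrightarrow> 2 * int X \<le> int M" by simp

lemma core_range:
  assumes c: "1 \<le> c" "c \<le> n" and r: "r < N'" and par: "odd n \<or> even N'"
  shows "even (core n N' c r + int (n*N') + 1) \<and> \<bar>core n N' c r\<bar> \<le> int (n*N') - 1"
proof -
  have cA: "core n N' c r = sgnl (c+r) * Aval n N' c r" by (rule core_eq)
  have ab: "\<bar>core n N' c r\<bar> = \<bar>Aval n N' c r\<bar>" using cA by (simp add: sgnl_abs)
  have ev: "even (core n N' c r + int (n*N') + 1) = even (Aval n N' c r + int (n*N') + 1)"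
    using cA sgnl_even by (metis add.assoc)
  show ?thesis
  proof (cases "even N'")
    case True
    define X where "X = n*(r div 2) + c"
    have A: "Aval n N' c r = 2 * int X - 1" unfolding X_def by (rule Aval_even_case[OF True])
    obtain k where k: "N' = 2*k" using True by (auto elim!: evenE)
    have "r div 2 + 1 \<le> k" using r k by linarith
    hence "n * (r div 2 + 1) \<le> n * k" by (rule mult_le_mono2)
    hence "X \<le> n * k" using c unfolding X_def by (simp add: algebra_simps)
    hence "2 * X \<le> n * N'" using k by simp
    hence X2: "2 * int X \<le> int (n*N')" by (rule n2i)
    have "1 \<le> X" using c unfolding X_def by simp
    hence X1: "1 \<le> int X" by simp
    have "even (int (n*N'))" using k by simp
    then show ?thesis using ab ev A X1 X2 by (simp add: even_add)
  next
    case False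
    hence nodd: "odd n" using par by simp
    define X where "X = n*((r+1) div 2) + c"
    have A: "Aval n N' c r = 2 * int X - int n - 1" unfolding X_def by (rule Aval_odd_case[OF False])
    obtain k where k: "N' = 2*k+1" using False by (auto elim!: oddE)
    have "(r+1) div 2 \<le> k" using r k by linarith
    hence "n * ((r+1) div 2) \<le> n * k" by (rule mult_le_mono2)
    hence "X \<le> n * k + n" using c unfolding X_def by linarith
    hence "2 * X \<le> n * N' + n" using k by (simp add: algebra_simps)
    hence X2: "2 * int X \<le> int (n*N') + int n" using n2i by fastforce
    have "1 \<le> X" using c unfolding X_def by simp
    hence X1: "1 \<le> int X" by simp
    have nN: "int n \<le> int (n*N')" using k by simp
    have "odd (int (n*N'))" using k nodd by simp
    moreover have "odd (int n)" using nodd by simp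
    ultimately show ?thesis using ab ev A X1 X2 nN by (simp add: even_add)
  qed
qed

definition jsel :: "nat list \<Rightarrow> nat \<Rightarrow> nat \<Rightarrow> nat" where
  "jsel m p q = (if even (m!p) \<and> odd (m!q * card (grid_verts ((m[p:=1])[q:=1]))) then q else p)"
definition ksel :: "nat list \<Rightarrow> nat \<Rightarrow> nat \<Rightarrow> nat" where
  "ksel m p q = (if even (m!p) \<and> odd (m!q * card (grid_verts ((m[p:=1])[q:=1]))) then p else q)"
definition bet :: "nat list \<Rightarrow> nat list \<Rightarrow> nat" where
  "bet m' = (SOME \<beta>. bij_betw \<beta> (grid_verts m') {0..<card (grid_verts m')})"
definition rowi :: "nat list \<Rightarrow> nat \<Rightarrow> nat \<Rightarrow> nat list \<Rightarrow> nat" where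
  "rowi m j k x = (x!k - 1) + m!k * bet ((m[j:=1])[k:=1]) ((x[j:=1])[k:=1])"
definition Nrow :: "nat list \<Rightarrow> nat \<Rightarrow> nat \<Rightarrow> nat" where
  "Nrow m j k = m!k * card (grid_verts ((m[j:=1])[k:=1]))"
definition slab :: "nat list \<Rightarrow> nat \<Rightarrow> nat \<Rightarrow> nat list \<Rightarrow> nat" where
  "slab m p q x = (let j = jsel m p q; k = ksel m p q in
     nat ((core (m!j) (Nrow m j k) (x!j) (rowi m j k x) + int (m!j * Nrow m j k) + 1) div 2))"

lemma bet_bij: "bij_betw (bet m') (grid_verts m') {0..<card (grid_verts m')}"
proof -
  obtain h where "bij_betw h (grid_verts m') {0..<card (grid_verts m')}"
    using ex_bij_betw_finite_nat[OF gv_finite] by blast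
  then show ?thesis unfolding bet_def
    by (rule someI[where P = "\<lambda>\<beta>. bij_betw \<beta> (grid_verts m') {0..<card (grid_verts m')}"])
qed

lemma jk_props:
  assumes "p \<noteq> q" "p < length m" "q < length m"
  shows "jsel m p q \<noteq> ksel m p q \<and> jsel m p q < length m \<and> ksel m p q < length m \<and>
    ((jsel m p q = p \<and> ksel m p q = q) \<or> (jsel m p q = q \<and> ksel m p q = p)) \<and>
    (odd (m ! jsel m p q) \<or> even (Nrow m (jsel m p q) (ksel m p q)))"
proof -
  have sw: "(m[q:=1])[p:=1] = (m[p:=1])[q:=1]" using assms(1) by (metis list_update_swap)
  show ?thesis
  proof (cases "even (m!p) \<and> odd (m!q * card (grid_verts ((m[p:=1])[q:=1])))")
    case True
    then show ?thesis using assms by (simp add: jsel_def ksel_def Nrow_def sw)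
  next
    case False
    then show ?thesis using assms by (auto simp add: jsel_def ksel_def Nrow_def sw)
  qed
qed

lemma card_gv_jk:
  assumes "j \<noteq> k" "j < length m" "k < length m"
  shows "card (grid_verts m) = m!j * Nrow m j k"
proof -
  have "card (grid_verts m) = m!j * card (grid_verts (m[j:=1]))" using gv_card_split assms by blast
  also have "card (grid_verts (m[j:=1])) = (m[j:=1])!k * card (grid_verts ((m[j:=1])[k:=1]))"
    using gv_card_split[of k "m[j:=1]"] assms by simp
  finally show ?thesis using assms by (simp add: Nrow_def)
qed

lemma upd_eq3:
  assumes "length x = length y" "x!j = y!j" "x!k = y!k" "(x[j:=a])[k:=b] = (y[j:=a])[k:=b]"
  shows "x = y"
proof (rule nth_equalityI)
  show "length x = length y" by fact
  fix i assume i: "i < length x"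
  show "x!i = y!i"
  proof (cases "i = j \<or> i = k")
    case True then show ?thesis using assms by auto
  next
    case False
    then have "(x[j:=a])[k:=b] ! i = x!i" "(y[j:=a])[k:=b] ! i = y!i" by auto
    then show ?thesis using assms(4) by simp
  qed
qed

lemma rowpair_bij:
  assumes jk: "j \<noteq> k" "j < length m" "k < length m"
  shows "bij_betw (\<lambda>x. (x!j, rowi m j k x)) (grid_verts m) ({1..m!j} \<times> {0..<Nrow m j k})"
proof -
  let ?m' = "(m[j:=1])[k:=1]"
  let ?L = "\<lambda>(a,w). (a - 1) + m!k * bet ?m' w"
  have rl: "rowi m j k x = ?L (x!k, (x[j:=1])[k:=1])" for x by (simp add: rowi_def)
  have mem: "(x!k, (x[j:=1])[k:=1]) \<in> {1..m!k} \<times> grid_verts ?m'" if "x \<in> grid_verts m" for x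
    using that jk by (auto simp: grid_verts_def nth_list_update)
  have inj: "inj_on (\<lambda>x. (x!j, rowi m j k x)) (grid_verts m)"
  proof (rule inj_onI)
    fix x y assume x: "x \<in> grid_verts m" and y: "y \<in> grid_verts m"
      and e: "(x!j, rowi m j k x) = (y!j, rowi m j k y)"
    have "m!k > 0" using gv_nth[OF x jk(3)] by simp
    then have bl: "bij_betw ?L ({1..m!k} \<times> grid_verts ?m') {0..<m!k * card (grid_verts ?m')}"
      by (intro bij_lin bet_bij)
    have "?L (x!k, (x[j:=1])[k:=1]) = ?L (y!k, (y[j:=1])[k:=1])" using e rl by simp
    then have "(x!k, (x[j:=1])[k:=1]) = (y!k, (y[j:=1])[k:=1])"
      using inj_onD[OF bij_betw_imp_inj_on[OF bl] _ mem[OF x] mem[OF y]] by blast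
    then show "x = y" using e gv_len[OF x] gv_len[OF y] by (intro upd_eq3[of x y j k 1 1]) auto
  qed
  have sub: "(\<lambda>x. (x!j, rowi m j k x)) ` grid_verts m \<subseteq> {1..m!j} \<times> {0..<Nrow m j k}"
  proof clarify
    fix x assume x: "x \<in> grid_verts m"
    have "m!k > 0" using gv_nth[OF x jk(3)] by simp
    then have bl: "bij_betw ?L ({1..m!k} \<times> grid_verts ?m') {0..<m!k * card (grid_verts ?m')}"
      by (intro bij_lin bet_bij)
    have "?L (x!k, (x[j:=1])[k:=1]) \<in> {0..<m!k * card (grid_verts ?m')}"
      using bij_betwE[OF bl] mem[OF x] by blast
    then have "rowi m j k x \<in> {0..<m!k * card (grid_verts ?m')}" using rl by metis
    then show "x!j \<in> {1..m!j} \<and> rowi m j k x \<in> {0..<Nrow m j k}"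
      using gv_nth[OF x jk(2)] by (simp add: Nrow_def)
  qed
  have "card ((\<lambda>x. (x!j, rowi m j k x)) ` grid_verts m) = card ({1..m!j} \<times> {0..<Nrow m j k})"
    using card_image[OF inj] card_gv_jk[OF jk] by (simp add: card_cartesian_product)
  then have "(\<lambda>x. (x!j, rowi m j k x)) ` grid_verts m = {1..m!j} \<times> {0..<Nrow m j k}"
    using sub by (intro card_subset_eq) auto
  then show ?thesis using inj by (simp add: bij_betw_def)
qed

lemma arange: "\<bar>x\<bar> \<le> M - 1 \<Longrightarrow> x + M + 1 \<ge> 2 \<and> x + M + 1 \<le> 2*(M::int)" by arith
lemma ev2: "even (a::int) \<Longrightarrow> a = 2 * (a div 2)" by simp

lemma slab_bij:
  assumes pq: "p \<noteq> q" "p < length m" "q < length m"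
  shows "bij_betw (slab m p q) (grid_verts m) {1..card (grid_verts m)}"
proof -
  define j where "j = jsel m p q"
  define k where "k = ksel m p q"
  have P: "j \<noteq> k" "j < length m" "k < length m" "odd (m!j) \<or> even (Nrow m j k)"
    using jk_props[OF pq] unfolding j_def k_def by auto
  define n where "n = m!j"
  define N' where "N' = Nrow m j k"
  have M: "card (grid_verts m) = n * N'" using card_gv_jk[OF P(1-3)] by (simp add: n_def N'_def)
  define h where "h = (\<lambda>(c,r). nat ((core n N' c r + int (n*N') + 1) div 2))"
  have sl: "slab m p q = h \<circ> (\<lambda>x. (x!j, rowi m j k x))"
    by (rule ext) (simp add: slab_def j_def[symmetric] k_def[symmetric] h_def n_def N'_def Let_def)
  show ?thesis
  proof (cases "n * N' = 0")
    case True
    then have "grid_verts m = {}" using M gv_finite by (metis card_0_eq)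
    then show ?thesis using M True by (simp add: bij_betw_def)
  next
    case False
    then have n1: "1 \<le> n" by simp
    have par: "odd n \<or> even N'" using P(4) by (simp add: n_def N'_def)
    have V: "even (core n N' c r + int(n*N') + 1) \<and> \<bar>core n N' c r\<bar> \<le> int(n*N') - 1"
      if "(c,r) \<in> {1..n} \<times> {0..<N'}" for c r
      using core_range[of c n r N'] that par by auto
    have hb: "bij_betw h ({1..n} \<times> {0..<N'}) {1..n*N'}"
    proof -
      have inj: "inj_on h ({1..n} \<times> {0..<N'})"
      proof (rule inj_onI)
        fix x y assume x: "x \<in> {1..n} \<times> {0..<N'}" and y: "y \<in> {1..n} \<times> {0..<N'}" and e: "h x = h y"
        obtain c r c' r' where xy: "x = (c,r)" "y = (c',r')" by fastforce
        define a where "a = core n N' c r + int (n*N') + 1"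
        define a' where "a' = core n N' c' r' + int (n*N') + 1"
        have ea: "even a" "a \<ge> 2" using V[of c r] x xy unfolding a_def by auto
        have ea': "even a'" "a' \<ge> 2" using V[of c' r'] y xy unfolding a'_def by auto
        have "nat (a div 2) = nat (a' div 2)" using e xy by (simp add: h_def a_def a'_def)
        moreover have "a div 2 \<ge> 1" "a' div 2 \<ge> 1" using ea ea' by auto
        ultimately have "a div 2 = a' div 2" by simp
        then have "a = a'" using ev2[OF ea(1)] ev2[OF ea'(1)] by simp
        then have "core n N' c r = core n N' c' r'" unfolding a_def a'_def by simp
        then have "(\<lambda>(c,r). core n N' c r) x = (\<lambda>(c,r). core n N' c r) y" using xy by simp
        then show "x = y" using inj_onD[OF core_inj[OF n1 par] _ x y] by blast
      qed
      have sub: "h ` ({1..n} \<times> {0..<N'}) \<subseteq> {1..n*N'}"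
      proof clarify
        fix c r assume cr: "c \<in> {1..n}" "r \<in> {0..<N'}"
        define a where "a = core n N' c r + int (n*N') + 1"
        have ea: "even a" "a \<ge> 2" "a \<le> 2 * int (n*N')"
          using arange[of "core n N' c r" "int (n*N')"] V[of c r] cr unfolding a_def by auto
        have "h (c,r) = nat (a div 2)" by (simp add: h_def a_def)
        moreover have l1: "a div 2 \<ge> 1" using ea by auto
        moreover have l2: "a div 2 \<le> int (n*N')" 
        proof -
          have "a div 2 \<le> (2 * int (n*N')) div 2" by (rule zdiv_mono1[OF ea(3)]) simp
          then show ?thesis by simp
        qed
        moreover have "nat (a div 2) \<le> n*N'" using l2 nat_le_iff by blast
        moreover have "1 \<le> nat (a div 2)" using l1 by simp
        ultimately show "h (c,r) \<in> {1..n*N'}" by auto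
      qed
      have "card (h ` ({1..n} \<times> {0..<N'})) = card {1..n*N'}"
        using card_image[OF inj] by (simp add: card_cartesian_product)
      then have "h ` ({1..n} \<times> {0..<N'}) = {1..n*N'}" using sub by (intro card_subset_eq) auto
      then show ?thesis using inj by (simp add: bij_betw_def)
    qed
    have rb: "bij_betw (\<lambda>x. (x!j, rowi m j k x)) (grid_verts m) ({1..n} \<times> {0..<N'})"
      using rowpair_bij[OF P(1-3)] by (simp add: n_def N'_def)
    show ?thesis unfolding sl M by (rule bij_betw_trans[OF rb hb])
  qed
qed

lemma core_sum0:
  assumes jk: "j \<noteq> k" "j < length m" "k < length m" and C: "C \<subseteq> grid_verts m"
    and tj: "bij_betw tj C C" "\<And>y. y \<in> C \<Longrightarrow> \<exists>v. tj y = y[j:=v] \<and> (v = Suc (y!j) \<or> Suc v = y!j)"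
    and tk: "bij_betw tk C C" "\<And>y. y \<in> C \<Longrightarrow> \<exists>v. tk y = y[k:=v] \<and> (v = Suc (y!k) \<or> Suc v = y!k)"
  shows "(\<Sum>y\<in>C. core n N' (y!j) (rowi m j k y)) = 0"
proof -
  define T1 where "T1 y = sgnl (y!j) * (sgnl (rowi m j k y) * Bv n N' (rowi m j k y))" for y
  define T2 where "T2 y = sgnl (rowi m j k y) * (sgnl (y!j) * (2 * int (y!j) - int n - 1))" for y
  have cT: "core n N' (y!j) (rowi m j k y) = T1 y + T2 y" for y by (simp add: core_def T1_def T2_def)
  have s1: "2 * sum T1 C = int (card C) * 0"
  proof (rule sum_pair_const[OF tj(1)])
    fix y assume y: "y \<in> C"
    obtain v where v: "tj y = y[j:=v]" "v = Suc (y!j) \<or> Suc v = y!j" using tj(2)[OF y] by blast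
    have len: "length y = length m" using C y gv_len by blast
    have r: "rowi m j k (tj y) = rowi m j k y" using v(1) jk len by (simp add: rowi_def)
    have "sgnl ((tj y)!j) = - sgnl (y!j)"
    proof (cases "v = Suc (y!j)")
      case True then show ?thesis using v jk len by (simp add: sgnl_Suc)
    next
      case False then have "y!j = Suc v" using v(2) by simp
      then show ?thesis using v jk len by (simp add: sgnl_Suc)
    qed
    then show "T1 y + T1 (tj y) = 0" using r by (simp add: T1_def)
  qed
  have s2: "2 * sum T2 C = int (card C) * 0"
  proof (rule sum_pair_const[OF tk(1)])
    fix y assume y: "y \<in> C"
    obtain v where v: "tk y = y[k:=v]" "v = Suc (y!k) \<or> Suc v = y!k" using tk(2)[OF y] by blast
    have len: "length y = length m" using C y gv_len by blast
    have yk: "1 \<le> y!k" using gv_nth[of y m k] C y jk by auto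
    have ty: "tk y \<in> C" using tk(1) y by (auto simp: bij_betw_def)
    have vk: "1 \<le> v" using gv_nth[of "tk y" m k] C ty jk v(1) len by auto
    have upd: "((y[k:=v])[j:=1])[k:=1] = (y[j:=1])[k:=1]"
      using jk(1) by (metis list_update_overwrite list_update_swap)
    have j: "(tk y)!j = y!j" using v(1) jk by simp
    have "sgnl (rowi m j k (tk y)) = - sgnl (rowi m j k y)"
    proof (cases "v = Suc (y!k)")
      case True
      have "rowi m j k (tk y) = Suc (rowi m j k y)"
        using True v(1) upd yk jk len by (simp add: rowi_def)
      then show ?thesis by (simp add: sgnl_Suc)
    next
      case False
      then have "Suc v = y!k" using v(2) by simp
      then have "rowi m j k y = Suc (rowi m j k (tk y))"
        using v(1) upd vk jk len by (simp add: rowi_def)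
      then show ?thesis by (simp add: sgnl_Suc)
    qed
    then show "T2 y + T2 (tk y) = 0" using j by (simp add: T2_def)
  qed
  show ?thesis using s1 s2 by (simp add: cT sum.distrib)
qed

lemma slab_sum:
  assumes pq: "p \<noteq> q" "p < length m" "q < length m" and C: "C \<subseteq> grid_verts m"
    and tp: "bij_betw tp C C" "\<And>y. y \<in> C \<Longrightarrow> \<exists>v. tp y = y[p:=v] \<and> (v = Suc (y!p) \<or> Suc v = y!p)"
    and tq: "bij_betw tq C C" "\<And>y. y \<in> C \<Longrightarrow> \<exists>v. tq y = y[q:=v] \<and> (v = Suc (y!q) \<or> Suc v = y!q)"
  shows "2 * (\<Sum>y\<in>C. int (slab m p q y)) = int (card C) * (int (card (grid_verts m)) + 1)"
proof -
  define j where "j = jsel m p q"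
  define k where "k = ksel m p q"
  have P: "j \<noteq> k" "j < length m" "k < length m" "odd (m!j) \<or> even (Nrow m j k)"
    "(j = p \<and> k = q) \<or> (j = q \<and> k = p)"
    using jk_props[OF pq] unfolding j_def k_def by auto
  define n where "n = m!j"
  define N' where "N' = Nrow m j k"
  have M: "card (grid_verts m) = n * N'" using card_gv_jk[OF P(1-3)] by (simp add: n_def N'_def)
  have par: "odd n \<or> even N'" using P(4) by (simp add: n_def N'_def)
  have S0: "(\<Sum>y\<in>C. core n N' (y!j) (rowi m j k y)) = 0"
    using P(5)
  proof
    assume "j = p \<and> k = q"
    then show ?thesis using core_sum0[OF P(1-3) C] tp tq by auto
  next
    assume "j = q \<and> k = p"
    then show ?thesis using core_sum0[OF P(1-3) C] tp tq by auto
  qed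
  have each: "2 * int (slab m p q y) = core n N' (y!j) (rowi m j k y) + int (card (grid_verts m)) + 1"
    if y: "y \<in> C" for y
  proof -
    have yj: "(y!j, rowi m j k y) \<in> {1..n} \<times> {0..<N'}"
      using bij_betwE[OF rowpair_bij[OF P(1-3)]] C y by (auto simp: n_def N'_def)
    define a where "a = core n N' (y!j) (rowi m j k y) + int (n*N') + 1"
    have ea: "even a" "a \<ge> 2" using core_range[of "y!j" n "rowi m j k y" N'] yj par unfolding a_def by auto
    have "slab m p q y = nat (a div 2)"
      by (simp add: slab_def j_def[symmetric] k_def[symmetric] n_def N'_def Let_def a_def)
    then have "2 * int (slab m p q y) = a" using ea ev2[OF ea(1)] by simp
    then show ?thesis using M by (simp add: a_def)
  qed
  have "2 * (\<Sum>y\<in>C. int (slab m p q y)) = (\<Sum>y\<in>C. 2 * int (slab m p q y))"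
    by (simp add: sum_distrib_left)
  also have "\<dots> = (\<Sum>y\<in>C. core n N' (y!j) (rowi m j k y) + (int (card (grid_verts m)) + 1))"
    using each by (intro sum.cong) auto
  also have "\<dots> = int (card C) * (int (card (grid_verts m)) + 1)"
    using S0 by (simp add: sum.distrib)
  finally show ?thesis .
qed


definition nb :: "nat \<Rightarrow> nat list \<Rightarrow> nat list \<Rightarrow> bool" where
  "nb d x y \<longleftrightarrow> (\<exists>i<d. (\<forall>j<d. j \<noteq> i \<longrightarrow> x!j = y!j) \<and> (x!i = Suc (y!i) \<or> y!i = Suc (x!i)))"

lemma nb_sym: "nb d x y \<Longrightarrow> nb d y x"
  unfolding nb_def by metis

lemma nb_neq: "nb d x y \<Longrightarrow> x \<noteq> y"
  unfolding nb_def by auto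

lemma sum1_iff:
  assumes "length x = d" "length y = d"
  shows "(\<Sum>i<d. nat \<bar>int (x!i) - int (y!i)\<bar>) = 1 \<longleftrightarrow> nb d x y"
proof -
  have a: "nat \<bar>int a - int b\<bar> = Suc 0 \<longleftrightarrow> (a = Suc b \<or> b = Suc a)" for a b :: nat by arith
  have b: "nat \<bar>int a - int b\<bar> = 0 \<longleftrightarrow> a = b" for a b :: nat by arith
  have "(\<Sum>i<d. nat \<bar>int (x!i) - int (y!i)\<bar>) = Suc 0 \<longleftrightarrow>
      (\<exists>i\<in>{..<d}. nat \<bar>int (x!i) - int (y!i)\<bar> = Suc 0 \<and>
        (\<forall>j\<in>{..<d}. i \<noteq> j \<longrightarrow> nat \<bar>int (x!j) - int (y!j)\<bar> = 0))"
    by (rule sum_eq_Suc0_iff) simp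
  also have "\<dots> \<longleftrightarrow> nb d x y" unfolding nb_def a b by auto
  finally show ?thesis by simp
qed

lemma ge_iff:
  assumes "x \<in> grid_verts ns" "y \<in> grid_verts ns"
  shows "{x,y} \<in> grid_edges ns \<longleftrightarrow> nb (length ns) x y"
proof
  assume "{x,y} \<in> grid_edges ns"
  then obtain x' y' where e: "{x,y} = {x',y'}" "x' \<in> grid_verts ns" "y' \<in> grid_verts ns"
    "(\<Sum>i<length ns. nat \<bar>int (x'!i) - int (y'!i)\<bar>) = 1"
    unfolding grid_edges_def by blast
  then have "nb (length ns) x' y'" using sum1_iff[of x' "length ns" y'] gv_len by blast
  with e(1) show "nb (length ns) x y" by (metis doubleton_eq_iff nb_sym)
next
  assume "nb (length ns) x y"
  then have "(\<Sum>i<length ns. nat \<bar>int (x!i) - int (y!i)\<bar>) = 1"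
    using sum1_iff[of x "length ns" y] gv_len assms by blast
  then show "{x,y} \<in> grid_edges ns" unfolding grid_edges_def using assms by blast
qed

lemma ge_elim:
  assumes "e \<in> grid_edges ns"
  obtains x y where "e = {x,y}" "x \<in> grid_verts ns" "y \<in> grid_verts ns" "nb (length ns) x y"
proof -
  obtain x y where e: "e = {x,y}" "x \<in> grid_verts ns" "y \<in> grid_verts ns"
    "(\<Sum>i<length ns. nat \<bar>int (x!i) - int (y!i)\<bar>) = 1"
    using assms unfolding grid_edges_def by blast
  then have "nb (length ns) x y" using sum1_iff[of x "length ns" y] gv_len by blast
  with e that show ?thesis by blast
qed

lemma collapse:
  assumes len: "length x = d" "length p = d" "length q = d" "length u = d" and al: "\<alpha> < d"
    and xp: "nb d x p" and xq: "nb d x q" and pq: "p \<noteq> q"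
    and ag: "\<And>j. j < d \<Longrightarrow> j \<noteq> \<alpha> \<Longrightarrow> p!j = u!j \<and> q!j = u!j"
    and pu: "p!\<alpha> = Suc (u!\<alpha>) \<or> u!\<alpha> = Suc (p!\<alpha>)"
    and qu: "q!\<alpha> = Suc (u!\<alpha>) \<or> u!\<alpha> = Suc (q!\<alpha>)"
  shows "x = u"
proof -
  have pqa: "p!\<alpha> \<noteq> q!\<alpha>"
  proof
    assume "p!\<alpha> = q!\<alpha>"
    then have "p = q" using len ag by (intro nth_equalityI) (auto, metis)
    with pq show False by simp
  qed
  obtain g where g: "g < d" "\<And>j. j < d \<Longrightarrow> j \<noteq> g \<Longrightarrow> x!j = p!j" "x!g = Suc (p!g) \<or> p!g = Suc (x!g)"
    using xp unfolding nb_def by blast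
  obtain g' where g': "g' < d" "\<And>j. j < d \<Longrightarrow> j \<noteq> g' \<Longrightarrow> x!j = q!j" "x!g' = Suc (q!g') \<or> q!g' = Suc (x!g')"
    using xq unfolding nb_def by blast
  have "g = \<alpha>"
  proof (rule ccontr)
    assume ga: "g \<noteq> \<alpha>"
    then have "x!\<alpha> = p!\<alpha>" using g al by simp
    then have "g' = \<alpha>" using g' pqa al by (metis)
    have "x = p"
    proof (rule nth_equalityI)
      show "length x = length p" using len by simp
      fix j assume "j < length x"
      then show "x!j = p!j"
        using g g' ag ga \<open>g' = \<alpha>\<close> len \<open>x!\<alpha> = p!\<alpha>\<close> by (metis)
    qed
    then show False using nb_neq[OF xp] by simp
  qed
  have "g' = \<alpha>"
  proof (rule ccontr)
    assume ga: "g' \<noteq> \<alpha>"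
    then have "x!\<alpha> = q!\<alpha>" using g' al by simp
    have "x = q"
    proof (rule nth_equalityI)
      show "length x = length q" using len by simp
      fix j assume "j < length x"
      then show "x!j = q!j"
        using g g' ag ga \<open>g = \<alpha>\<close> len \<open>x!\<alpha> = q!\<alpha>\<close> by (metis)
    qed
    then show False using nb_neq[OF xq] by simp
  qed
  show "x = u"
  proof (rule nth_equalityI)
    show "length x = length u" using len by simp
    fix j assume j: "j < length x"
    show "x!j = u!j"
    proof (cases "j = \<alpha>")
      case True
      have "x!\<alpha> = u!\<alpha>" using g(3) g'(3) pu qu pqa unfolding \<open>g = \<alpha>\<close> \<open>g' = \<alpha>\<close> by arith
      then show ?thesis using True by simp
    next
      case False
      then show ?thesis using g(2) ag \<open>g = \<alpha>\<close> j len by simp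
    qed
  qed
qed

lemma cnb:
  assumes len: "length x = d" "length p = d" "length q = d" and ab: "\<alpha> \<noteq> \<beta>" "\<alpha> < d" "\<beta> < d"
    and xp: "nb d x p" and xq: "nb d x q" and dif: "p!\<alpha> \<noteq> q!\<alpha>" "p!\<beta> \<noteq> q!\<beta>"
    and ag: "\<And>j. j < d \<Longrightarrow> j \<noteq> \<alpha> \<Longrightarrow> j \<noteq> \<beta> \<Longrightarrow> p!j = q!j"
  shows "x = p[\<alpha> := q!\<alpha>] \<or> x = p[\<beta> := q!\<beta>]"
proof -
  obtain g where g: "g < d" "\<And>j. j < d \<Longrightarrow> j \<noteq> g \<Longrightarrow> x!j = p!j"
    using xp unfolding nb_def by blast
  obtain g' where g': "g' < d" "\<And>j. j < d \<Longrightarrow> j \<noteq> g' \<Longrightarrow> x!j = q!j"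
    using xq unfolding nb_def by blast
  have a: "\<alpha> = g \<or> \<alpha> = g'" using g g' dif ab by metis
  have b: "\<beta> = g \<or> \<beta> = g'" using g g' dif ab by metis
  show ?thesis
  proof (cases "g = \<alpha>")
    case True
    then have "g' = \<beta>" using b ab by auto
    have "x = p[\<alpha> := q!\<alpha>]"
      using len g g' True \<open>g' = \<beta>\<close> ab by (intro nth_equalityI) (auto simp: nth_list_update)
    then show ?thesis by simp
  next
    case False
    then have "g' = \<alpha>" "g = \<beta>" using a b ab by auto
    have "x = p[\<beta> := q!\<beta>]"
      using len g g' \<open>g' = \<alpha>\<close> \<open>g = \<beta>\<close> ab by (intro nth_equalityI) (auto simp: nth_list_update)
    then show ?thesis by simp
  qed
qed


definition CVa :: "nat list \<Rightarrow> nat list set" where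
  "CVa a = {y. length y = length a \<and> (\<forall>i<length a. y!i = a!i \<or> y!i = Suc (a!i))}"

definition cube_ok :: "nat list \<Rightarrow> nat list \<Rightarrow> bool" where
  "cube_ok ns a \<longleftrightarrow> length a = length ns \<and> (\<forall>i<length ns. 1 \<le> a!i \<and> Suc (a!i) \<le> ns!i)"

locale cpy =
  fixes ns :: "nat list" and V :: "nat list set" and \<psi> :: "nat list \<Rightarrow> nat list"
  assumes bij: "bij_betw \<psi> (grid_verts (replicate (length ns) 2)) V"
    and Vsub: "V \<subseteq> grid_verts ns"
    and adj: "\<And>z z'. z \<in> grid_verts (replicate (length ns) 2) \<Longrightarrow> z' \<in> grid_verts (replicate (length ns) 2)
       \<Longrightarrow> nb (length ns) z z' \<Longrightarrow> nb (length ns) (\<psi> z) (\<psi> z')"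
begin

abbreviation "d \<equiv> length ns"
abbreviation "CV \<equiv> grid_verts (replicate (length ns) 2)"

definition zT :: "nat set \<Rightarrow> nat list" where "zT T = map (\<lambda>l. if l \<in> T then 2 else 1) [0..<d]"

lemma zT_len[simp]: "length (zT T) = d" by (simp add: zT_def)
lemma zT_nth: "l < d \<Longrightarrow> zT T ! l = (if l \<in> T then 2 else 1)" by (simp add: zT_def)

lemma zT_CV: "zT T \<in> CV" by (rule gv_I) (auto simp: zT_nth)

lemma zT_nb: "k \<in> T \<Longrightarrow> k < d \<Longrightarrow> nb d (zT T) (zT (T - {k}))"
  unfolding nb_def by (rule exI[of _ k]) (auto simp: zT_nth)

lemma zT_inj: "T \<subseteq> {..<d} \<Longrightarrow> T' \<subseteq> {..<d} \<Longrightarrow> zT T = zT T' \<Longrightarrow> T = T'"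
proof -
  assume a: "T \<subseteq> {..<d}" "T' \<subseteq> {..<d}" "zT T = zT T'"
  have "l \<in> T \<longleftrightarrow> l \<in> T'" for l
  proof (cases "l < d")
    case True
    then have "zT T ! l = zT T' ! l" using a by simp
    then show ?thesis using True by (auto simp: zT_nth split: if_splits)
  next
    case False then show ?thesis using a by auto
  qed
  then show "T = T'" by auto
qed

lemma CV_zT: "z \<in> CV \<Longrightarrow> z = zT {l. l < d \<and> z!l = 2}"
proof -
  assume z: "z \<in> CV"
  show ?thesis
  proof (rule nth_equalityI)
    show "length z = length (zT {l. l < d \<and> z!l = 2})" using gv_len[OF z] by simp
    fix l assume "l < length z"
    then have l: "l < d" using gv_len[OF z] by simp
    have "1 \<le> z!l \<and> z!l \<le> 2" using gv_nth[OF z, of l] l by simp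
    then show "z!l = zT {l. l < d \<and> z!l = 2} ! l" using l by (auto simp: zT_nth)
  qed
qed

lemma psi_inj: "inj_on \<psi> CV" using bij by (simp add: bij_betw_def)
lemma psi_V: "z \<in> CV \<Longrightarrow> \<psi> z \<in> V" using bij by (auto simp: bij_betw_def)
lemma psi_len: "z \<in> CV \<Longrightarrow> length (\<psi> z) = d" using psi_V Vsub gv_len by blast

lemma psi_zT_eq: "T \<subseteq> {..<d} \<Longrightarrow> T' \<subseteq> {..<d} \<Longrightarrow> \<psi> (zT T) = \<psi> (zT T') \<Longrightarrow> T = T'"
  using psi_inj zT_CV zT_inj by (metis inj_onD)

definition u where "u = \<psi> (zT {})"
definition nbv where "nbv k = \<psi> (zT {k})"

lemma u_len: "length u = d" unfolding u_def using psi_len zT_CV by blast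
lemma nbv_len: "length (nbv k) = d" unfolding nbv_def using psi_len zT_CV by blast

lemma u_nb: "k < d \<Longrightarrow> nb d u (nbv k)"
proof -
  assume k: "k < d"
  have "nb d (zT {k}) (zT ({k} - {k}))" using zT_nb[of k "{k}"] k by simp
  then have "nb d (\<psi> (zT {k})) (\<psi> (zT {}))" using adj zT_CV by simp
  then show ?thesis unfolding u_def nbv_def by (rule nb_sym)
qed

definition pi where "pi k = (SOME \<alpha>. \<alpha> < d \<and> (\<forall>j<d. j \<noteq> \<alpha> \<longrightarrow> u!j = nbv k!j) \<and>
     (u!\<alpha> = Suc (nbv k!\<alpha>) \<or> nbv k!\<alpha> = Suc (u!\<alpha>)))"

lemma pi_prop: "k < d \<Longrightarrow> pi k < d \<and> (\<forall>j<d. j \<noteq> pi k \<longrightarrow> u!j = nbv k!j) \<and>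
     (u!(pi k) = Suc (nbv k!(pi k)) \<or> nbv k!(pi k) = Suc (u!(pi k)))"
  unfolding pi_def using u_nb[unfolded nb_def] by (rule someI_ex) 

lemma pi_inj: "inj_on pi {..<d}"
proof (rule inj_onI, rule ccontr)
  fix k l assume k: "k \<in> {..<d}" and l: "l \<in> {..<d}" and e: "pi k = pi l" and kl: "k \<noteq> l"
  define x where "x = \<psi> (zT {k,l})"
  have "nb d (zT {k,l}) (zT ({k,l} - {l}))" using zT_nb[of l "{k,l}"] l by simp
  moreover have "{k,l} - {l} = {k}" using kl by auto
  ultimately have xk: "nb d x (nbv k)" unfolding x_def nbv_def using adj zT_CV by metis
  have "nb d (zT {k,l}) (zT ({k,l} - {k}))" using zT_nb[of k "{k,l}"] k by simp
  moreover have "{k,l} - {k} = {l}" using kl by auto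
  ultimately have xl: "nb d x (nbv l)" unfolding x_def nbv_def using adj zT_CV by metis
  have ne: "nbv k \<noteq> nbv l" unfolding nbv_def using psi_zT_eq[of "{k}" "{l}"] k l kl by auto
  have pk: "pi k < d" "\<forall>j<d. j \<noteq> pi k \<longrightarrow> u!j = nbv k!j"
     "u!(pi k) = Suc (nbv k!(pi k)) \<or> nbv k!(pi k) = Suc (u!(pi k))" using pi_prop k by auto
  have pl: "\<forall>j<d. j \<noteq> pi k \<longrightarrow> u!j = nbv l!j"
     "u!(pi k) = Suc (nbv l!(pi k)) \<or> nbv l!(pi k) = Suc (u!(pi k))" using pi_prop[of l] l e by auto
  have "x = u"
    by (rule collapse[of x d "nbv k" "nbv l" u "pi k"])
       (use psi_len zT_CV nbv_len u_len pk pl xk xl ne x_def in auto)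
  then have "{k,l} = {}" unfolding x_def u_def using psi_zT_eq[of "{k,l}" "{}"] k l by auto
  then show False by simp
qed

lemma pi_range: "pi ` {..<d} = {..<d}"
  using pi_inj pi_prop by (intro endo_inj_surj) auto

definition ka where "ka \<alpha> = the_inv_into {..<d} pi \<alpha>"

lemma ka_prop: "\<alpha> < d \<Longrightarrow> ka \<alpha> < d \<and> pi (ka \<alpha>) = \<alpha>"
proof -
  assume a: "\<alpha> < d"
  then have "\<alpha> \<in> pi ` {..<d}" using pi_range by simp
  then show ?thesis unfolding ka_def using pi_inj
    by (metis f_the_inv_into_f the_inv_into_into lessThan_iff subset_refl)
qed

lemma ka_pi: "k < d \<Longrightarrow> ka (pi k) = k"
  unfolding ka_def using pi_inj by (simp add: the_inv_into_f_f)

definition W where "W \<alpha> = nbv (ka \<alpha>) ! \<alpha>"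

lemma W_ne: "\<alpha> < d \<Longrightarrow> W \<alpha> = Suc (u!\<alpha>) \<or> u!\<alpha> = Suc (W \<alpha>)"
  using pi_prop[of "ka \<alpha>"] ka_prop[of \<alpha>] unfolding W_def by auto

lemma nbv_other: "k < d \<Longrightarrow> j < d \<Longrightarrow> j \<noteq> pi k \<Longrightarrow> nbv k ! j = u ! j"
  using pi_prop[of k] by auto

definition tgt where "tgt T = map (\<lambda>\<alpha>. if ka \<alpha> \<in> T then W \<alpha> else u!\<alpha>) [0..<d]"

lemma tgt_len[simp]: "length (tgt T) = d" by (simp add: tgt_def)
lemma tgt_nth: "\<alpha> < d \<Longrightarrow> tgt T ! \<alpha> = (if ka \<alpha> \<in> T then W \<alpha> else u!\<alpha>)" by (simp add: tgt_def)

lemma main: "T \<subseteq> {..<d} \<Longrightarrow> \<psi> (zT T) = tgt T"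
proof (induction "card T" arbitrary: T rule: less_induct)
  case less
  have finT: "finite T" using less.prems finite_subset by blast
  show ?case
  proof (cases "T = {}")
    case True
    show ?thesis
    proof (rule nth_equalityI)
      show "length (\<psi> (zT T)) = length (tgt T)" using psi_len zT_CV by simp
      fix \<alpha> assume "\<alpha> < length (\<psi> (zT T))"
      then have "\<alpha> < d" using psi_len zT_CV by simp
      then show "\<psi> (zT T) ! \<alpha> = tgt T ! \<alpha>" using True by (simp add: tgt_nth u_def)
    qed
  next
    case ne: False
    then obtain k where k: "k \<in> T" by blast
    show ?thesis
    proof (cases "T = {k}")
      case True
      have kd: "k < d" using k less.prems by auto
      show ?thesis
      proof (rule nth_equalityI)
        show "length (\<psi> (zT T)) = length (tgt T)" using psi_len zT_CV by simp
        fix \<alpha> assume "\<alpha> < length (\<psi> (zT T))"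
        then have a: "\<alpha> < d" using psi_len zT_CV by simp
        show "\<psi> (zT T) ! \<alpha> = tgt T ! \<alpha>"
        proof (cases "ka \<alpha> = k")
          case True
          then have "\<alpha> = pi k" using ka_prop[OF a] by auto
          then show ?thesis using \<open>T = {k}\<close> True a by (simp add: tgt_nth W_def nbv_def)
        next
          case False
          then have "\<alpha> \<noteq> pi k" using ka_pi[OF kd] by auto
          then show ?thesis using \<open>T = {k}\<close> False a kd by (simp add: tgt_nth nbv_other[symmetric] nbv_def)
        qed
      qed
    next
      case False
      then obtain l where l: "l \<in> T" "l \<noteq> k" using k by blast
      have kd: "k < d" and ld: "l < d" using k l less.prems by auto
      have c1: "card (T - {k}) < card T" using finT k by (rule card_Diff1_less)
      have c2: "card (T - {l}) < card T" using finT l(1) by (rule card_Diff1_less)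
      have "l \<in> T - {k}" using l by simp
      then have "card (T - {k} - {l}) < card (T - {k})" using finT by (intro card_Diff1_less) auto
      then have c3: "card (T - {k} - {l}) < card T" using c1 by linarith
      have IH1: "\<psi> (zT (T - {k})) = tgt (T - {k})" using less.hyps[OF c1] less.prems by auto
      have IH2: "\<psi> (zT (T - {l})) = tgt (T - {l})" using less.hyps[OF c2] less.prems by auto
      have IH3: "\<psi> (zT (T - {k} - {l})) = tgt (T - {k} - {l})" using less.hyps[OF c3] less.prems by auto
      define x where "x = \<psi> (zT T)"
      have xp: "nb d x (tgt (T - {k}))" unfolding x_def IH1[symmetric]
        using adj zT_CV zT_nb[OF k kd] by blast
      have xq: "nb d x (tgt (T - {l}))" unfolding x_def IH2[symmetric]
        using adj zT_CV zT_nb[OF l(1) ld] by blast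
      have pab: "pi l \<noteq> pi k" "pi l < d" "pi k < d" using pi_inj l kd ld pi_prop
        by (auto dest: inj_onD)
      have kal: "ka (pi l) = l" and kak: "ka (pi k) = k" using ka_pi kd ld by auto
      have d1: "tgt (T - {k}) ! pi l \<noteq> tgt (T - {l}) ! pi l"
        using W_ne[of "pi l"] pab kal l by (auto simp: tgt_nth)
      have d2: "tgt (T - {k}) ! pi k \<noteq> tgt (T - {l}) ! pi k"
        using W_ne[of "pi k"] pab kak l k by (auto simp: tgt_nth)
      have ag: "tgt (T - {k}) ! j = tgt (T - {l}) ! j" if "j < d" "j \<noteq> pi l" "j \<noteq> pi k" for j
      proof -
        have "ka j \<noteq> k" "ka j \<noteq> l" using that ka_prop[of j] by auto
        then show ?thesis using that by (simp add: tgt_nth)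
      qed
      have "x = (tgt (T - {k}))[pi l := tgt (T - {l}) ! pi l] \<or> x = (tgt (T - {k}))[pi k := tgt (T - {l}) ! pi k]"
        by (rule cnb[of x d _ _ "pi l" "pi k"]) (use x_def psi_len zT_CV pab xp xq d1 d2 ag in auto)
      moreover have "(tgt (T - {k}))[pi l := tgt (T - {l}) ! pi l] = tgt (T - {k} - {l})"
      proof (rule nth_equalityI)
        show "length ((tgt (T - {k}))[pi l := tgt (T - {l}) ! pi l]) = length (tgt (T - {k} - {l}))" by simp
        fix j assume "j < length ((tgt (T - {k}))[pi l := tgt (T - {l}) ! pi l])"
        then have j: "j < d" by simp
        show "(tgt (T - {k}))[pi l := tgt (T - {l}) ! pi l] ! j = tgt (T - {k} - {l}) ! j"
          using j pab kal ka_prop[OF j] by (cases "j = pi l") (auto simp: tgt_nth nth_list_update)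
      qed
      moreover have "(tgt (T - {k}))[pi k := tgt (T - {l}) ! pi k] = tgt T"
      proof (rule nth_equalityI)
        show "length ((tgt (T - {k}))[pi k := tgt (T - {l}) ! pi k]) = length (tgt T)" by simp
        fix j assume "j < length ((tgt (T - {k}))[pi k := tgt (T - {l}) ! pi k])"
        then have j: "j < d" by simp
        show "(tgt (T - {k}))[pi k := tgt (T - {l}) ! pi k] ! j = tgt T ! j"
          using j pab kak k l ka_prop[OF j] by (cases "j = pi k") (auto simp: tgt_nth nth_list_update)
      qed
      moreover have "x \<noteq> tgt (T - {k} - {l})"
      proof
        assume "x = tgt (T - {k} - {l})"
        then have "\<psi> (zT T) = \<psi> (zT (T - {k} - {l}))" unfolding x_def IH3 .
        moreover have "T - {k} - {l} \<subseteq> {..<d}" using less.prems by blast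
        ultimately have "T = T - {k} - {l}" using psi_zT_eq[OF less.prems] by blast
        then show False using k by auto
      qed
      ultimately have "x = tgt T" by metis
      then show ?thesis unfolding x_def .
    qed
  qed
qed

definition a0 where "a0 = map (\<lambda>\<alpha>. min (u!\<alpha>) (W \<alpha>)) [0..<d]"

lemma V_eq: "V = CVa a0"
proof
  have Vim: "V = \<psi> ` CV" using bij by (simp add: bij_betw_def)
  show "V \<subseteq> CVa a0"
  proof
    fix y assume "y \<in> V"
    then obtain z where z: "z \<in> CV" "y = \<psi> z" using Vim by auto
    define T where "T = {l. l < d \<and> z!l = 2}"
    have "y = tgt T" using main[of T] CV_zT[OF z(1)] z(2) unfolding T_def by auto
    have "tgt T ! \<alpha> = min (u!\<alpha>) (W \<alpha>) \<or> tgt T ! \<alpha> = Suc (min (u!\<alpha>) (W \<alpha>))" if a: "\<alpha> < d" for \<alpha>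
      using W_ne[OF a] a by (auto simp: tgt_nth)
    then show "y \<in> CVa a0" using \<open>y = tgt T\<close> unfolding CVa_def a0_def by auto
  qed
  show "CVa a0 \<subseteq> V"
  proof
    fix y assume y: "y \<in> CVa a0"
    define T where "T = {k. k < d \<and> y!(pi k) \<noteq> u!(pi k)}"
    have ly: "length y = d" using y unfolding CVa_def a0_def by simp
    have "tgt T = y"
    proof (rule nth_equalityI)
      show "length (tgt T) = length y" using ly by simp
      fix \<alpha> assume "\<alpha> < length (tgt T)"
      then have a: "\<alpha> < d" by simp
      have ya: "y!\<alpha> = min (u!\<alpha>) (W \<alpha>) \<or> y!\<alpha> = Suc (min (u!\<alpha>) (W \<alpha>))"
        using y a unfolding CVa_def a0_def by auto
      have "ka \<alpha> \<in> T \<longleftrightarrow> y!\<alpha> \<noteq> u!\<alpha>" using ka_prop[OF a] unfolding T_def by auto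
      then show "tgt T ! \<alpha> = y ! \<alpha>" using W_ne[OF a] ya a by (auto simp: tgt_nth)
    qed
    moreover have "T \<subseteq> {..<d}" unfolding T_def by auto
    ultimately have "y = \<psi> (zT T)" using main by simp
    then show "y \<in> V" using Vim zT_CV by auto
  qed
qed

lemma a0_ok: "cube_ok ns a0"
proof -
  have "u \<in> grid_verts ns" unfolding u_def using psi_V zT_CV Vsub by blast
  have nbvg: "k < d \<Longrightarrow> nbv k \<in> grid_verts ns" for k unfolding nbv_def using psi_V zT_CV Vsub by blast
  have "1 \<le> a0!\<alpha> \<and> Suc (a0!\<alpha>) \<le> ns!\<alpha>" if a: "\<alpha> < d" for \<alpha>
  proof -
    have "1 \<le> u!\<alpha>" "u!\<alpha> \<le> ns!\<alpha>" using gv_nth[OF \<open>u \<in> grid_verts ns\<close> a] by auto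
    moreover have "1 \<le> W \<alpha>" "W \<alpha> \<le> ns!\<alpha>" using gv_nth[OF nbvg[of "ka \<alpha>"] a] ka_prop[OF a]
      unfolding W_def by auto
    ultimately show ?thesis using W_ne[OF a] a unfolding a0_def by auto
  qed
  then show ?thesis unfolding cube_ok_def a0_def by simp
qed

end


definition tau :: "nat list \<Rightarrow> nat list \<Rightarrow> nat list" where
  "tau a y = map (\<lambda>i. y!i + 1 - a!i) [0..<length a]"

definition cubeE :: "nat list \<Rightarrow> nat list \<Rightarrow> nat list set set" where
  "cubeE ns a = {e \<in> grid_edges ns. e \<subseteq> CVa a}"

lemma CVa_len: "y \<in> CVa a \<Longrightarrow> length y = length a" by (simp add: CVa_def)
lemma CVa_nth: "y \<in> CVa a \<Longrightarrow> i < length a \<Longrightarrow> y!i = a!i \<or> y!i = Suc (a!i)" by (simp add: CVa_def)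

lemma CVa_sub: "cube_ok ns a \<Longrightarrow> CVa a \<subseteq> grid_verts ns"
  unfolding cube_ok_def CVa_def grid_verts_def by force

lemma tau_nth: "i < length a \<Longrightarrow> tau a y ! i = y!i + 1 - a!i" by (simp add: tau_def)

lemma tau_bij:
  assumes ok: "cube_ok ns a"
  shows "bij_betw (tau a) (CVa a) (grid_verts (replicate (length ns) 2))"
proof (rule bij_betw_byWitness[where f' = "\<lambda>z. map (\<lambda>i. z!i + a!i - 1) [0..<length a]"])
  have la: "length a = length ns" using ok by (simp add: cube_ok_def)
  have a1: "i < length a \<Longrightarrow> 1 \<le> a!i" for i using ok la by (simp add: cube_ok_def)
  show "\<forall>y\<in>CVa a. map (\<lambda>i. tau a y ! i + a!i - 1) [0..<length a] = y"
  proof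
    fix y assume y: "y \<in> CVa a"
    show "map (\<lambda>i. tau a y ! i + a!i - 1) [0..<length a] = y"
      by (rule nth_equalityI) (use y a1 in \<open>auto simp: tau_nth CVa_len dest: CVa_nth\<close>)
  qed
  show "\<forall>z\<in>grid_verts (replicate (length ns) 2). tau a (map (\<lambda>i. z!i + a!i - 1) [0..<length a]) = z"
  proof
    fix z assume z: "z \<in> grid_verts (replicate (length ns) 2)"
    have z1: "1 \<le> z!i" if "i < length a" for i using gv_nth[OF z, of i] that la by simp
    show "tau a (map (\<lambda>i. z!i + a!i - 1) [0..<length a]) = z"
    proof (rule nth_equalityI)
      show "length (tau a (map (\<lambda>i. z!i + a!i - 1) [0..<length a])) = length z"
        using z la by (simp add: tau_def gv_len)
      fix i assume "i < length (tau a (map (\<lambda>i. z!i + a!i - 1) [0..<length a]))"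
      then have i: "i < length a" by (simp add: tau_def)
      have "1 \<le> z!i" "1 \<le> a!i" using z1[OF i] a1[OF i] by auto
      then show "tau a (map (\<lambda>i. z!i + a!i - 1) [0..<length a]) ! i = z ! i"
        using i by (simp add: tau_def)
    qed
  qed
  show "tau a ` CVa a \<subseteq> grid_verts (replicate (length ns) 2)"
  proof
    fix z assume "z \<in> tau a ` CVa a"
    then obtain y where y: "y \<in> CVa a" "z = tau a y" by auto
    show "z \<in> grid_verts (replicate (length ns) 2)"
    proof (rule gv_I)
      show "length z = length (replicate (length ns) 2)" using y la by (simp add: tau_def)
      fix i assume "i < length (replicate (length ns) 2)"
      then have i: "i < length a" using la by simp
      then show "1 \<le> z!i \<and> z!i \<le> replicate (length ns) 2 ! i"
        using CVa_nth[OF y(1) i] y(2) la by (auto simp: tau_nth)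
    qed
  qed
  show "(\<lambda>z. map (\<lambda>i. z!i + a!i - 1) [0..<length a]) ` grid_verts (replicate (length ns) 2) \<subseteq> CVa a"
  proof
    fix y assume "y \<in> (\<lambda>z. map (\<lambda>i. z!i + a!i - 1) [0..<length a]) ` grid_verts (replicate (length ns) 2)"
    then obtain z where z: "z \<in> grid_verts (replicate (length ns) 2)" "y = map (\<lambda>i. z!i + a!i - 1) [0..<length a]"
      by auto
    have zz: "z!i = 1 \<or> z!i = 2" if "i < length a" for i using gv_nth[OF z(1), of i] that la by auto
    have "y!i = a!i \<or> y!i = Suc (a!i)" if i: "i < length a" for i
      using zz[OF i] a1[OF i] z(2) i by auto
    then show "y \<in> CVa a" using z(2) unfolding CVa_def by auto
  qed
qed

lemma tau_nb:
  assumes ok: "cube_ok ns a" and x: "x \<in> CVa a" and y: "y \<in> CVa a"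
  shows "nb (length ns) (tau a x) (tau a y) \<longleftrightarrow> nb (length ns) x y"
proof -
  have la: "length a = length ns" using ok by (simp add: cube_ok_def)
  have e1: "tau a x ! i = tau a y ! i \<longleftrightarrow> x!i = y!i" if "i < length ns" for i
    using CVa_nth[OF x, of i] CVa_nth[OF y, of i] that la by (auto simp: tau_nth)
  have e2: "tau a x ! i = Suc (tau a y ! i) \<longleftrightarrow> x!i = Suc (y!i)" if "i < length ns" for i
    using CVa_nth[OF x, of i] CVa_nth[OF y, of i] that la by (auto simp: tau_nth)
  have e3: "tau a y ! i = Suc (tau a x ! i) \<longleftrightarrow> y!i = Suc (x!i)" if "i < length ns" for i
    using CVa_nth[OF x, of i] CVa_nth[OF y, of i] that la by (auto simp: tau_nth)
  show ?thesis unfolding nb_def using e1 e2 e3 by (metis (no_types, lifting))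
qed

lemma tau_edges:
  assumes ok: "cube_ok ns a"
  shows "(\<lambda>e. tau a ` e) ` cubeE ns a = grid_edges (replicate (length ns) 2)"
proof -
  let ?CV = "grid_verts (replicate (length ns) 2)"
  have tb: "bij_betw (tau a) (CVa a) ?CV" by (rule tau_bij[OF ok])
  have sub: "CVa a \<subseteq> grid_verts ns" by (rule CVa_sub[OF ok])
  show ?thesis
  proof
    show "(\<lambda>e. tau a ` e) ` cubeE ns a \<subseteq> grid_edges (replicate (length ns) 2)"
    proof clarify
      fix e assume e: "e \<in> cubeE ns a"
      then have eg: "e \<in> grid_edges ns" and es: "e \<subseteq> CVa a" by (auto simp: cubeE_def)
      obtain x y where xy: "e = {x,y}" "x \<in> grid_verts ns" "y \<in> grid_verts ns" "nb (length ns) x y"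
        using ge_elim[OF eg] by blast
      have xc: "x \<in> CVa a" "y \<in> CVa a" using es xy by auto
      have "nb (length ns) (tau a x) (tau a y)" using tau_nb[OF ok xc] xy by simp
      moreover have "tau a x \<in> ?CV" "tau a y \<in> ?CV" using tb xc by (auto simp: bij_betw_def)
      ultimately have "{tau a x, tau a y} \<in> grid_edges (replicate (length ns) 2)"
        using ge_iff[of "tau a x" "replicate (length ns) 2" "tau a y"] by simp
      then show "tau a ` e \<in> grid_edges (replicate (length ns) 2)" using xy by simp
    qed
    show "grid_edges (replicate (length ns) 2) \<subseteq> (\<lambda>e. tau a ` e) ` cubeE ns a"
    proof
      fix e' assume e': "e' \<in> grid_edges (replicate (length ns) 2)"
      obtain z z' where zz: "e' = {z,z'}" "z \<in> ?CV" "z' \<in> ?CV" "nb (length ns) z z'"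
        using ge_elim[OF e'] by (metis length_replicate)
      obtain x where x: "x \<in> CVa a" "tau a x = z" using zz tb by (metis bij_betw_imp_surj_on imageE)
      obtain y where y: "y \<in> CVa a" "tau a y = z'" using zz tb by (metis bij_betw_imp_surj_on imageE)
      have "nb (length ns) x y" using tau_nb[OF ok x(1) y(1)] x y zz by simp
      then have "{x,y} \<in> grid_edges ns" using ge_iff sub x y by blast
      then have "{x,y} \<in> cubeE ns a" using x y by (simp add: cubeE_def)
      moreover have "e' = tau a ` {x,y}" using zz x y by simp
      ultimately show "e' \<in> (\<lambda>e. tau a ` e) ` cubeE ns a" by blast
    qed
  qed
qed

lemma cubeE_fin: "cube_ok ns a \<Longrightarrow> finite (cubeE ns a)"
proof -
  assume ok: "cube_ok ns a"
  have "cubeE ns a \<subseteq> Pow (CVa a)" by (auto simp: cubeE_def)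
  moreover have "finite (CVa a)" using CVa_sub[OF ok] gv_finite finite_subset by blast
  ultimately show ?thesis by (meson finite_Pow_iff finite_subset)
qed

lemma card_cubeE:
  assumes ok: "cube_ok ns a"
  shows "card (cubeE ns a) = card (grid_edges (replicate (length ns) 2))"
proof -
  have "inj_on (tau a) (\<Union> (cubeE ns a))"
    using bij_betw_imp_inj_on[OF tau_bij[OF ok]] by (rule inj_on_subset) (auto simp: cubeE_def)
  then have "inj_on (\<lambda>e. tau a ` e) (cubeE ns a)" by (rule inj_on_image)
  then show ?thesis using card_image tau_edges[OF ok] by metis
qed

lemma cube_copy:
  assumes ok: "cube_ok ns a"
  shows "(CVa a, cubeE ns a) \<in> copies (grid ns) (cube (length ns))"
  unfolding copies_def subgraph_def graph_iso_def grid_def cube_def verts_def edges_def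
  using CVa_sub[OF ok] tau_bij[OF ok] tau_edges[OF ok] by (auto simp: cubeE_def)

lemma copies_char:
  assumes S: "S \<in> copies (grid ns) (cube (length ns))"
  shows "\<exists>a. cube_ok ns a \<and> verts S = CVa a \<and> edges S = cubeE ns a"
proof -
  let ?CV = "grid_verts (replicate (length ns) 2)"
  let ?CE = "grid_edges (replicate (length ns) 2)"
  have sg: "verts S \<subseteq> grid_verts ns" "edges S \<subseteq> grid_edges ns" "\<And>e. e \<in> edges S \<Longrightarrow> e \<subseteq> verts S"
    using S unfolding copies_def subgraph_def grid_def verts_def edges_def by auto
  obtain \<phi> where phi: "bij_betw \<phi> (verts S) ?CV" "(\<lambda>e. \<phi> ` e) ` edges S = ?CE"
    using S unfolding copies_def graph_iso_def cube_def grid_def verts_def edges_def by auto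
  define \<psi> where "\<psi> = the_inv_into (verts S) \<phi>"
  have pb: "bij_betw \<psi> ?CV (verts S)" unfolding \<psi>_def by (rule bij_betw_the_inv_into[OF phi(1)])
  have pinv: "\<psi> (\<phi> v) = v" if "v \<in> verts S" for v
    unfolding \<psi>_def using phi(1) that by (simp add: bij_betw_def the_inv_into_f_f)
  interpret cpy ns "verts S" \<psi>
  proof
    show "bij_betw \<psi> ?CV (verts S)" by (rule pb)
    show "verts S \<subseteq> grid_verts ns" by (rule sg(1))
    fix z z' assume z: "z \<in> ?CV" and z': "z' \<in> ?CV" and n: "nb (length ns) z z'"
    have "{z,z'} \<in> ?CE" using ge_iff[OF z z'] n by simp
    then have "{z,z'} \<in> (\<lambda>e. \<phi> ` e) ` edges S" using phi(2) by simp
    then obtain e where e: "e \<in> edges S" "\<phi> ` e = {z,z'}" by (metis imageE)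
    have "\<psi> ` (\<phi> ` e) = (\<lambda>v. \<psi> (\<phi> v)) ` e" by (simp add: image_image)
    also have "\<dots> = id ` e" using sg(3)[OF e(1)] pinv by (intro image_cong) auto
    finally have "e = \<psi> ` (\<phi> ` e)" by simp
    then have "{\<psi> z, \<psi> z'} \<in> edges S" using e by simp
    then have "{\<psi> z, \<psi> z'} \<in> grid_edges ns" using sg(2) by blast
    moreover have "\<psi> z \<in> grid_verts ns" "\<psi> z' \<in> grid_verts ns"
      using pb z z' sg(1) by (auto simp: bij_betw_def)
    ultimately show "nb (length ns) (\<psi> z) (\<psi> z')" using ge_iff by blast
  qed
  have ok: "cube_ok ns a0" by (rule a0_ok)
  have V: "verts S = CVa a0" by (rule V_eq)
  have esub: "edges S \<subseteq> cubeE ns a0" using sg V by (auto simp: cubeE_def)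
  have "\<Union> (edges S) \<subseteq> verts S" using sg(3) by blast
  then have "inj_on \<phi> (\<Union> (edges S))" using inj_on_subset[OF bij_betw_imp_inj_on[OF phi(1)]] by blast
  then have "inj_on (\<lambda>e. \<phi> ` e) (edges S)" by (rule inj_on_image)
  then have "card (edges S) = card ?CE" using card_image phi(2) by metis
  then have "card (edges S) = card (cubeE ns a0)" using card_cubeE[OF ok] by simp
  then have "edges S = cubeE ns a0" using esub cubeE_fin[OF ok] by (intro card_subset_eq) auto
  then show ?thesis using ok V by blast
qed


definition emb :: "nat \<times> nat list \<Rightarrow> nat list set" where
  "emb p = (case p of (i,y) \<Rightarrow> {y, y[i := Suc (y!i)]})"

definition Dom :: "nat list \<Rightarrow> (nat \<times> nat list) set" where
  "Dom ns = Sigma {..<length ns} (\<lambda>i. grid_verts (ns[i := ns!i - 1]))"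

lemma Dom_gv:
  assumes "(i,y) \<in> Dom ns"
  shows "y \<in> grid_verts ns \<and> y[i := Suc (y!i)] \<in> grid_verts ns \<and> i < length ns"
proof -
  have i: "i < length ns" and y: "y \<in> grid_verts (ns[i := ns!i - 1])" using assms by (auto simp: Dom_def)
  have ly: "length y = length ns" using gv_len[OF y] by simp
  have b: "1 \<le> y!j \<and> y!j \<le> (if j = i then ns!i - 1 else ns!j)" if "j < length ns" for j
    using gv_nth[OF y, of j] that i by (auto simp: nth_list_update)
  have g1: "y \<in> grid_verts ns"
  proof (rule gv_I)
    show "length y = length ns" by (rule ly)
    fix j assume j: "j < length ns"
    show "1 \<le> y!j \<and> y!j \<le> ns!j" using b[OF j] by (cases "j = i") auto
  qed
  have g2: "y[i := Suc (y!i)] \<in> grid_verts ns"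
  proof (rule gv_I)
    show "length (y[i := Suc (y!i)]) = length ns" using ly by simp
    fix j assume j: "j < length ns"
    show "1 \<le> y[i := Suc (y!i)]!j \<and> y[i := Suc (y!i)]!j \<le> ns!j"
      using b[OF j] b[OF i] ly i j by (cases "j = i") (auto simp: nth_list_update)
  qed
  show ?thesis using g1 g2 i by simp
qed

lemma Dom_I:
  assumes y: "y \<in> grid_verts ns" and i: "i < length ns" and s: "Suc (y!i) \<le> ns!i"
  shows "(i,y) \<in> Dom ns"
proof -
  have "y \<in> grid_verts (ns[i := ns!i - 1])"
  proof (rule gv_I)
    show "length y = length (ns[i := ns!i - 1])" using gv_len[OF y] by simp
    fix j assume "j < length (ns[i := ns!i - 1])"
    then have j: "j < length ns" by simp
    show "1 \<le> y!j \<and> y!j \<le> ns[i := ns!i - 1] ! j"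
      using gv_nth[OF y j] s i j by (cases "j = i") (auto simp: nth_list_update)
  qed
  then show ?thesis using i by (simp add: Dom_def)
qed

lemma emb_nb: "(i,y) \<in> Dom ns \<Longrightarrow> nb (length ns) y (y[i := Suc (y!i)])"
  using Dom_gv[of i y ns] unfolding nb_def by (intro exI[of _ i]) (auto simp: gv_len)

lemma emb_bij: "bij_betw emb (Dom ns) (grid_edges ns)"
proof -
  have inj: "inj_on emb (Dom ns)"
  proof (rule inj_onI)
    fix p p' assume p: "p \<in> Dom ns" and p': "p' \<in> Dom ns" and e: "emb p = emb p'"
    obtain i y where iy: "p = (i,y)" by fastforce
    obtain i' y' where iy': "p' = (i',y')" by fastforce
    have l: "length y = length ns" "length y' = length ns" "i < length ns" "i' < length ns"
      using Dom_gv[of i y ns] Dom_gv[of i' y' ns] p p' iy iy' gv_len by auto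
    have e2: "{y, y[i := Suc (y!i)]} = {y', y'[i' := Suc (y'!i')]}" using e iy iy' by (simp add: emb_def)
    show "p = p'"
    proof (cases "y = y'")
      case True
      then have "y[i := Suc (y!i)] = y[i' := Suc (y!i')]" using e2
        by (metis doubleton_eq_iff)
      then have "i = i'" using l True
        by (metis lessI n_not_Suc_n nth_list_update_eq nth_list_update_neq)
      then show ?thesis using True iy iy' by simp
    next
      case False
      then have a: "y = y'[i' := Suc (y'!i')]" "y' = y[i := Suc (y!i)]" using e2
        by (metis doubleton_eq_iff)+
      have b1: "y!i' = Suc (y'!i')" using l by (subst a(1)) simp
      have b2: "y'!i = Suc (y!i)" using l by (subst a(2)) simp
      show ?thesis
      proof (cases "i = i'")
        case True then show ?thesis using b1 b2 by simp
      next
        case False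
        then have "y!i = y'!i" using l by (subst a(1)) simp
        then show ?thesis using b2 by simp
      qed
    qed
  qed
  have sub: "emb ` Dom ns \<subseteq> grid_edges ns"
  proof clarify
    fix i y assume p: "(i,y) \<in> Dom ns"
    have "{y, y[i := Suc (y!i)]} \<in> grid_edges ns"
      using ge_iff[of y ns "y[i := Suc (y!i)]"] Dom_gv[OF p] emb_nb[OF p] by simp
    then show "emb (i,y) \<in> grid_edges ns" by (simp add: emb_def)
  qed
  have sup: "grid_edges ns \<subseteq> emb ` Dom ns"
  proof
    fix e assume e: "e \<in> grid_edges ns"
    obtain x y where xy: "e = {x,y}" "x \<in> grid_verts ns" "y \<in> grid_verts ns" "nb (length ns) x y"
      using ge_elim[OF e] by blast
    obtain i where i: "i < length ns" "\<And>j. j < length ns \<Longrightarrow> j \<noteq> i \<Longrightarrow> x!j = y!j"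
      "x!i = Suc (y!i) \<or> y!i = Suc (x!i)" using xy(4) unfolding nb_def by blast
    have lx: "length x = length ns" "length y = length ns" using xy gv_len by auto
    show "e \<in> emb ` Dom ns"
    proof (cases "x!i = Suc (y!i)")
      case True
      have "x = y[i := Suc (y!i)]" using True i lx by (intro nth_equalityI) (auto simp: nth_list_update)
      moreover have "(i,y) \<in> Dom ns"
        using Dom_I[OF xy(3) i(1)] gv_nth[OF xy(2) i(1)] True by simp
      ultimately show ?thesis using xy(1) by (auto simp: emb_def image_iff intro!: bexI[of _ "(i,y)"])
    next
      case False
      then have F: "y!i = Suc (x!i)" using i by simp
      have "y = x[i := Suc (x!i)]" using F i lx by (intro nth_equalityI) (auto simp: nth_list_update)
      moreover have "(i,x) \<in> Dom ns"
        using Dom_I[OF xy(2) i(1)] gv_nth[OF xy(3) i(1)] F by simp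
      ultimately show ?thesis using xy(1) by (auto simp: emb_def image_iff intro!: bexI[of _ "(i,x)"])
    qed
  qed
  show ?thesis using inj sub sup by (auto simp: bij_betw_def)
qed

definition Ci :: "nat list \<Rightarrow> nat \<Rightarrow> nat list set" where
  "Ci a i = {y \<in> CVa a. y!i = a!i}"

lemma Sig_Dom:
  assumes ok: "cube_ok ns a"
  shows "Sigma {..<length ns} (Ci a) \<subseteq> Dom ns"
proof clarify
  fix i y assume i: "i < length ns" and y: "y \<in> Ci a i"
  have yc: "y \<in> CVa a" and yi: "y!i = a!i" using y by (auto simp: Ci_def)
  have "y \<in> grid_verts ns" using CVa_sub[OF ok] yc by blast
  moreover have "Suc (y!i) \<le> ns!i" using ok i yi by (simp add: cube_ok_def)
  ultimately show "(i,y) \<in> Dom ns" using Dom_I i by blast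
qed

lemma cubeE_emb:
  assumes ok: "cube_ok ns a"
  shows "cubeE ns a = emb ` (Sigma {..<length ns} (Ci a))"
proof
  have la: "length a = length ns" using ok by (simp add: cube_ok_def)
  show "emb ` (Sigma {..<length ns} (Ci a)) \<subseteq> cubeE ns a"
  proof clarify
    fix i y assume i: "i < length ns" and y: "y \<in> Ci a i"
    have p: "(i,y) \<in> Dom ns" using Sig_Dom[OF ok] i y by blast
    have "emb (i,y) \<in> grid_edges ns" using emb_bij p by (auto simp: bij_betw_def)
    moreover have "y \<in> CVa a" "y!i = a!i" using y by (auto simp: Ci_def)
    then have "y[i := Suc (y!i)] \<in> CVa a" using i la
      unfolding CVa_def by (auto simp: nth_list_update)
    ultimately show "emb (i,y) \<in> cubeE ns a" using \<open>y \<in> CVa a\<close> by (simp add: cubeE_def emb_def)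
  qed
  show "cubeE ns a \<subseteq> emb ` (Sigma {..<length ns} (Ci a))"
  proof
    fix e assume e: "e \<in> cubeE ns a"
    then have "e \<in> emb ` Dom ns" using emb_bij by (auto simp: cubeE_def bij_betw_def)
    then obtain i y where p: "(i,y) \<in> Dom ns" "e = emb (i,y)" by auto
    have i: "i < length ns" using Dom_gv[OF p(1)] by simp
    have ly: "length y = length ns" using Dom_gv[OF p(1)] gv_len by blast
    have "y \<in> CVa a" "y[i := Suc (y!i)] \<in> CVa a" using e p by (auto simp: cubeE_def emb_def)
    then have "y!i = a!i \<or> y!i = Suc (a!i)" "Suc (y!i) = a!i \<or> Suc (y!i) = Suc (a!i)"
      using i la ly CVa_nth[of y a i] CVa_nth[of "y[i := Suc (y!i)]" a i] by auto
    then have "y!i = a!i" by auto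
    then have "y \<in> Ci a i" using \<open>y \<in> CVa a\<close> by (simp add: Ci_def)
    then show "e \<in> emb ` (Sigma {..<length ns} (Ci a))" using p i by auto
  qed
qed

lemma card_CVa:
  "cube_ok ns a \<Longrightarrow> card (CVa a) = card (grid_verts (replicate (length ns) 2))"
  using tau_bij bij_betw_same_card by blast

lemma card_Ci:
  assumes ok: "cube_ok ns a" and i: "i < length ns"
  shows "card (Ci a i) = card {z \<in> grid_verts (replicate (length ns) 2). z!i = 1}"
proof -
  have la: "length a = length ns" using ok by (simp add: cube_ok_def)
  have tb: "bij_betw (tau a) (CVa a) (grid_verts (replicate (length ns) 2))" by (rule tau_bij[OF ok])
  have inj: "inj_on (tau a) (Ci a i)" using bij_betw_imp_inj_on[OF tb] by (rule inj_on_subset) (auto simp: Ci_def)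
  have "tau a ` Ci a i = {z \<in> grid_verts (replicate (length ns) 2). z!i = 1}"
  proof
    show "tau a ` Ci a i \<subseteq> {z \<in> grid_verts (replicate (length ns) 2). z!i = 1}"
      using tb i la by (auto simp: Ci_def bij_betw_def tau_nth)
    show "{z \<in> grid_verts (replicate (length ns) 2). z!i = 1} \<subseteq> tau a ` Ci a i"
    proof clarify
      fix z assume z: "z \<in> grid_verts (replicate (length ns) 2)" "z!i = 1"
      obtain y where y: "y \<in> CVa a" "z = tau a y" using z tb by (auto simp: bij_betw_def)
      have "y!i + 1 - a!i = 1" using y z i la by (simp add: tau_nth)
      moreover have "y!i = a!i \<or> y!i = Suc (a!i)" using CVa_nth[OF y(1)] i la by simp
      ultimately have "y!i = a!i" by auto
      then show "z \<in> tau a ` Ci a i" using y by (auto simp: Ci_def)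
    qed
  qed
  then show ?thesis using card_image[OF inj] by simp
qed

definition tg :: "nat list \<Rightarrow> nat \<Rightarrow> nat list \<Rightarrow> nat list" where
  "tg a j y = y[j := (if y!j = a!j then Suc (a!j) else a!j)]"

lemma tg_CVa: "y \<in> CVa a \<Longrightarrow> j < length a \<Longrightarrow> tg a j y \<in> CVa a"
  unfolding tg_def CVa_def by (auto simp: nth_list_update)

lemma tg_tg:
  assumes "y \<in> CVa a" "j < length a" shows "tg a j (tg a j y) = y"
proof -
  have l: "length y = length a" using assms(1) by (simp add: CVa_def)
  have "tg a j (tg a j y) = y[j := y!j]"
    using CVa_nth[OF assms] l assms(2) unfolding tg_def by (auto simp: nth_list_update; metis list_update_id)
  then show ?thesis by simp
qed

lemma tg_Ci: "y \<in> Ci a i \<Longrightarrow> j < length a \<Longrightarrow> j \<noteq> i \<Longrightarrow> tg a j y \<in> Ci a i"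
  unfolding Ci_def using tg_CVa by (auto simp: tg_def)

lemma tg_bij:
  assumes "\<And>y. y \<in> C \<Longrightarrow> tg a j y \<in> C" "C \<subseteq> CVa a" "j < length a"
  shows "bij_betw (tg a j) C C"
  by (rule bij_betw_byWitness[where f' = "tg a j"]) (use assms tg_tg in auto)

lemma tg_step:
  assumes "y \<in> CVa a" "j < length a"
  shows "\<exists>v. tg a j y = y[j:=v] \<and> (v = Suc (y!j) \<or> Suc v = y!j)"
  using CVa_nth[OF assms] unfolding tg_def by auto

lemma blocks:
  fixes g :: "nat \<Rightarrow> 'a \<Rightarrow> nat" and A :: "nat \<Rightarrow> 'a set" and M :: "nat \<Rightarrow> nat"
  assumes bj: "\<And>i. i < d \<Longrightarrow> bij_betw (g i) (A i) {1..M i}"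
  shows "bij_betw (\<lambda>(i,y). (\<Sum>j<i. M j) + g i y) (Sigma {..<d} A) {1..(\<Sum>j<d. M j)}"
proof -
  let ?f = "\<lambda>(i,y). (\<Sum>j<i. M j) + g i y"
  have mono: "(\<Sum>j<i. M j) \<le> (\<Sum>j<i'. M j)" if "i \<le> i'" for i i'
    using that by (intro sum_mono2) auto
  have gr: "1 \<le> g i y \<and> g i y \<le> M i" if "i < d" "y \<in> A i" for i y
    using bj[OF that(1)] that(2) by (auto simp: bij_betw_def)
  have inj: "inj_on ?f (Sigma {..<d} A)"
  proof (rule inj_onI)
    fix p p' assume p: "p \<in> Sigma {..<d} A" and p': "p' \<in> Sigma {..<d} A" and e: "?f p = ?f p'"
    obtain i y where iy: "p = (i,y)" by fastforce
    obtain i' y' where iy': "p' = (i',y')" by fastforce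
    have h: "i < d" "y \<in> A i" "i' < d" "y' \<in> A i'" using p p' iy iy' by auto
    have e2: "(\<Sum>j<i. M j) + g i y = (\<Sum>j<i'. M j) + g i' y'" using e iy iy' by simp
    have "\<not> i < i'"
    proof
      assume lt: "i < i'"
      have "(\<Sum>j<i. M j) + g i y \<le> (\<Sum>j<Suc i. M j)" using gr[OF h(1,2)] by simp
      also have "\<dots> \<le> (\<Sum>j<i'. M j)" using mono[of "Suc i" i'] lt by simp
      also have "\<dots> < (\<Sum>j<i'. M j) + g i' y'" using gr[OF h(3,4)] by simp
      finally show False using e2 by simp
    qed
    moreover have "\<not> i' < i"
    proof
      assume lt: "i' < i"
      have "(\<Sum>j<i'. M j) + g i' y' \<le> (\<Sum>j<Suc i'. M j)" using gr[OF h(3,4)] by simp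
      also have "\<dots> \<le> (\<Sum>j<i. M j)" using mono[of "Suc i'" i] lt by simp
      also have "\<dots> < (\<Sum>j<i. M j) + g i y" using gr[OF h(1,2)] by simp
      finally show False using e2 by simp
    qed
    ultimately have "i = i'" by simp
    then have "g i y = g i y'" using e2 by simp
    then have "y = y'" using bj[OF h(1)] h \<open>i = i'\<close> by (auto simp: bij_betw_def inj_on_def)
    then show "p = p'" using iy iy' \<open>i = i'\<close> by simp
  qed
  have sub: "?f ` Sigma {..<d} A \<subseteq> {1..(\<Sum>j<d. M j)}"
  proof clarify
    fix i y assume i: "i < d" and y: "y \<in> A i"
    have "(\<Sum>j<i. M j) + g i y \<le> (\<Sum>j<Suc i. M j)" using gr[OF i y] by simp
    also have "\<dots> \<le> (\<Sum>j<d. M j)" using mono[of "Suc i" d] i by simp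
    finally show "(\<Sum>j<i. M j) + g i y \<in> {1..(\<Sum>j<d. M j)}" using gr[OF i y] by simp
  qed
  have fin: "finite (A i)" if "i < d" for i using bj[OF that] bij_betw_finite by blast
  have "card (Sigma {..<d} A) = (\<Sum>i<d. card (A i))" using fin by (intro card_SigmaI) auto
  also have "\<dots> = (\<Sum>i<d. M i)"
  proof (rule sum.cong)
    fix i assume "i \<in> {..<d}"
    then have "card (A i) = card {1..M i}" using bj bij_betw_same_card by blast
    then show "card (A i) = M i" by simp
  qed simp
  finally have "card (?f ` Sigma {..<d} A) = card {1..(\<Sum>j<d. M j)}" using card_image[OF inj] by simp
  then have "?f ` Sigma {..<d} A = {1..(\<Sum>j<d. M j)}" using sub by (intro card_subset_eq) auto
  then show ?thesis using inj by (simp add: bij_betw_def)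
qed


definition VL :: "nat list \<Rightarrow> nat list \<Rightarrow> nat" where "VL ns = slab ns 0 1"
definition mi :: "nat list \<Rightarrow> nat \<Rightarrow> nat list" where "mi ns i = ns[i := ns!i - 1]"
definition pp :: "nat \<Rightarrow> nat" where "pp i = (if i = 0 then 1 else 0)"
definition qq :: "nat \<Rightarrow> nat" where "qq i = (if i \<le> 1 then 2 else 1)"
definition Mi :: "nat list \<Rightarrow> nat \<Rightarrow> nat" where "Mi ns i = card (grid_verts (mi ns i))"
definition EL3 :: "nat list \<Rightarrow> nat \<times> nat list \<Rightarrow> nat" where
  "EL3 ns p = (case p of (i,y) \<Rightarrow> (\<Sum>j<i. Mi ns j) + slab (mi ns i) (pp i) (qq i) y)"
definition EL2 :: "nat list \<Rightarrow> nat \<times> nat list \<Rightarrow> nat" where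
  "EL2 ns p = (case p of (i,y) \<Rightarrow> (if i = 0 then (2 * ns!0 - 1) * (y!1 - 1) + y!0
      else (2 * ns!0 - 1) * (ns!1 - y!1 - 1) + (2 * ns!0 - y!0)))"
definition EL :: "nat list \<Rightarrow> nat \<times> nat list \<Rightarrow> nat" where
  "EL ns p = (if length ns = 2 then EL2 ns p else EL3 ns p)"
definition FL :: "nat list \<Rightarrow> nat list + nat list set \<Rightarrow> nat" where
  "FL ns x = (case x of Inl v \<Rightarrow> VL ns v | Inr e \<Rightarrow> card (grid_verts ns) + EL ns (the_inv_into (Dom ns) emb e))"

lemma Dom_Sigma: "Dom ns = Sigma {..<length ns} (\<lambda>i. grid_verts (mi ns i))"
  by (simp add: Dom_def mi_def)

lemma pq_ok: "length ns \<ge> 3 \<Longrightarrow> i < length ns \<Longrightarrow> pp i \<noteq> qq i \<and> pp i < length ns \<and> qq i < length ns \<and> pp i \<noteq> i \<and> qq i \<noteq> i"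
  by (auto simp: pp_def qq_def)

lemma EL3_bij:
  assumes d3: "length ns \<ge> 3"
  shows "bij_betw (EL3 ns) (Dom ns) {1..card (Dom ns)}"
proof -
  have bj: "bij_betw (slab (mi ns i) (pp i) (qq i)) (grid_verts (mi ns i)) {1..Mi ns i}"
    if "i < length ns" for i
    unfolding Mi_def using pq_ok[OF d3 that] by (intro slab_bij) (auto simp: mi_def)
  have "bij_betw (\<lambda>(i,y). (\<Sum>j<i. Mi ns j) + slab (mi ns i) (pp i) (qq i) y)
      (Sigma {..<length ns} (\<lambda>i. grid_verts (mi ns i))) {1..(\<Sum>j<length ns. Mi ns j)}"
    by (rule blocks) (rule bj)
  then have b: "bij_betw (EL3 ns) (Dom ns) {1..(\<Sum>j<length ns. Mi ns j)}"
    unfolding Dom_Sigma EL3_def by (simp add: case_prod_unfold)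
  then have "card (Dom ns) = (\<Sum>j<length ns. Mi ns j)" using bij_betw_same_card by fastforce
  then show ?thesis using b by simp
qed

lemma gv11: "grid_verts [1,1] = {[1,1]}"
proof
  show "grid_verts [1,1] \<subseteq> {[1,1]}"
  proof
    fix x assume x: "x \<in> grid_verts [1,1]"
    have "x!0 = 1" "x!1 = 1" using gv_nth[OF x, of 0] gv_nth[OF x, of 1] by auto
    moreover have "length x = 2" using gv_len[OF x] by simp
    ultimately have "x = [1,1]" by (intro nth_equalityI) (auto simp: less_2_cases_iff)
    then show "x \<in> {[1,1]}" by simp
  qed
  show "{[1,1]} \<subseteq> grid_verts [1,1]" by (auto intro!: gv_I simp: nth_Cons')
qed

lemma card_gv2:
  assumes "length m = 2" shows "card (grid_verts m) = m!0 * m!1"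
proof -
  have "card (grid_verts m) = m!0 * Nrow m 0 1" using card_gv_jk[of 0 1 m] assms by simp
  moreover have "(m[0:=1])[1:=1] = [1,1]" using assms
    by (intro nth_equalityI) (auto simp: less_2_cases_iff nth_list_update)
  ultimately show ?thesis using gv11 by (simp add: Nrow_def)
qed

lemma lin_uniq2:
  fixes A q q' r r' :: nat
  assumes "1 \<le> r" "r \<le> A" "1 \<le> r'" "r' \<le> A" "A*q + r = A*q' + r'"
  shows "q = q' \<and> r = r'"
  using lin_uniq[OF assms] by simp

lemma EL2_bij:
  assumes d2: "length ns = 2" and n: "ns!0 \<ge> 2" "ns!1 \<ge> 2"
  shows "bij_betw (EL2 ns) (Dom ns) {1..card (Dom ns)}"
proof -
  define n1 where "n1 = ns!0"
  define n2 where "n2 = ns!1"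
  define A where "A = 2*n1 - 1"
  have D: "Dom ns = Sigma {..<2} (\<lambda>i. grid_verts (mi ns i))" using Dom_Sigma d2 by simp
  have m0: "mi ns 0 = [n1 - 1, n2]" and m1: "mi ns 1 = [n1, n2 - 1]"
    using d2 unfolding mi_def n1_def n2_def by (auto intro!: nth_equalityI simp: less_2_cases_iff nth_list_update)
  have mem0: "(0,y) \<in> Dom ns \<longleftrightarrow> length y = 2 \<and> 1 \<le> y!0 \<and> y!0 \<le> n1 - 1 \<and> 1 \<le> y!1 \<and> y!1 \<le> n2" for y
    unfolding D by (auto simp: m0 grid_verts_def less_Suc_eq)
  have mem1: "(1,y) \<in> Dom ns \<longleftrightarrow> length y = 2 \<and> 1 \<le> y!0 \<and> y!0 \<le> n1 \<and> 1 \<le> y!1 \<and> y!1 \<le> n2 - 1" for y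
    unfolding D using m1 by (auto simp: grid_verts_def less_Suc_eq)
  have memi: "p \<in> Dom ns \<Longrightarrow> fst p = 0 \<or> fst p = 1" for p unfolding D by auto
  have cD: "card (Dom ns) = (n1 - 1) * n2 + n1 * (n2 - 1)"
  proof -
    have "card (Dom ns) = (\<Sum>i<2. card (grid_verts (mi ns i)))" unfolding D
      by (intro card_SigmaI) (auto simp: gv_finite)
    also have "\<dots> = card (grid_verts (mi ns 0)) + card (grid_verts (mi ns 1))" by (simp add: numeral_2_eq_2)
    also have "\<dots> = (n1 - 1) * n2 + n1 * (n2 - 1)" unfolding m0 m1 by (simp add: card_gv2)
    finally show ?thesis .
  qed
  define qv where "qv p = (case p of (i,y) \<Rightarrow> if i = 0 then y!1 - 1 else n2 - y!1 - 1)" for p :: "nat \<times> nat list"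
  define rv where "rv p = (case p of (i,y) \<Rightarrow> if i = 0 then y!0 else 2*n1 - y!0)" for p :: "nat \<times> nat list"
  have qr: "EL2 ns p = A * qv p + rv p" for p
    by (simp add: EL2_def qv_def rv_def A_def n1_def n2_def split: prod.splits)
  have rb: "1 \<le> rv p \<and> rv p \<le> A \<and> (fst p = 0 \<longleftrightarrow> rv p < n1)" if "p \<in> Dom ns" for p
  proof -
    obtain i y where p: "p = (i,y)" by fastforce
    show ?thesis
    proof (cases "i = 0")
      case True then show ?thesis using mem0[of y] that p n unfolding rv_def A_def n1_def by auto
    next
      case False then have "i = 1" using memi[OF that] p by simp
      then show ?thesis using mem1[of y] that p n unfolding rv_def A_def n1_def by auto
    qed
  qed
  have inj: "inj_on (EL2 ns) (Dom ns)"
  proof (rule inj_onI)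
    fix p p' assume p: "p \<in> Dom ns" and p': "p' \<in> Dom ns" and e: "EL2 ns p = EL2 ns p'"
    have "qv p = qv p' \<and> rv p = rv p'" using lin_uniq2[of "rv p" A "rv p'" "qv p" "qv p'"] rb[OF p] rb[OF p'] e qr by auto
    then have qq: "qv p = qv p'" and rr: "rv p = rv p'" by auto
    have ii: "fst p = fst p'" using rb[OF p] rb[OF p'] rr memi[OF p] memi[OF p'] by auto
    obtain i y where iy: "p = (i,y)" by fastforce
    obtain y' where iy': "p' = (i,y')" using ii iy by (metis fst_conv prod.collapse)
    show "p = p'"
    proof (cases "i = 0")
      case True
      have h: "length y = 2" "1 \<le> y!1" "length y' = 2" "1 \<le> y'!1" using mem0 p p' iy iy' True by auto
      have "y!0 = y'!0" "y!1 - 1 = y'!1 - 1" using qq rr iy iy' True by (auto simp: qv_def rv_def)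
      then have "y = y'" using h by (intro nth_equalityI) (auto simp: less_2_cases_iff)
      then show ?thesis using iy iy' by simp
    next
      case False
      then have i1: "i = 1" using memi[OF p] iy by simp
      have h: "length y = 2" "y!1 \<le> n2 - 1" "y!0 \<le> n1" "length y' = 2" "y'!1 \<le> n2 - 1" "y'!0 \<le> n1"
        using mem1 p p' iy iy' i1 by auto
      have "2*n1 - y!0 = 2*n1 - y'!0" "n2 - y!1 - 1 = n2 - y'!1 - 1" using qq rr iy iy' i1 by (auto simp: qv_def rv_def)
      then have "y!0 = y'!0" "y!1 = y'!1" using h by auto
      then have "y = y'" using h by (intro nth_equalityI) (auto simp: less_2_cases_iff)
      then show ?thesis using iy iy' by simp
    qed
  qed
  have sub: "EL2 ns ` Dom ns \<subseteq> {1..card (Dom ns)}"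
  proof clarify
    fix i y assume p: "(i,y) \<in> Dom ns"
    obtain a b where ab: "n1 = Suc a" "n2 = Suc b" using n unfolding n1_def n2_def
      by (metis Suc_le_D numeral_2_eq_2)
    have E: "A * (n2 - 1) + (n1 - 1) = (n1 - 1) * n2 + n1 * (n2 - 1)"
      unfolding A_def ab by (simp add: algebra_simps)
    have "EL2 ns (i,y) \<le> A * (n2 - 1) + (n1 - 1)"
    proof (cases "i = 0")
      case True
      have h: "1 \<le> y!1" "y!1 \<le> n2" "y!0 \<le> n1 - 1" using mem0[of y] p True by auto
      have "A * (y!1 - 1) \<le> A * (n2 - 1)" using h by (intro mult_le_mono2) simp
      then have "A * (y!1 - 1) + y!0 \<le> A * (n2 - 1) + (n1 - 1)" using h(3) by (rule add_le_mono)
      moreover have "EL2 ns (i,y) = A * (y!1 - 1) + y!0" using True qr[of "(i,y)"] by (simp add: qv_def rv_def)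
      ultimately show ?thesis by simp
    next
      case False
      then have i1: "i = 1" using memi[of "(i,y)"] p by simp
      have h: "1 \<le> y!1" "y!1 \<le> n2 - 1" "1 \<le> y!0" "y!0 \<le> n1" using mem1[of y] p i1 by auto
      have "A * (n2 - y!1 - 1) + A \<le> A * (n2 - 1)"
      proof -
        have "n2 - y!1 - 1 + 1 \<le> n2 - 1" using h n by (simp add: n2_def)
        then have "A * (n2 - y!1 - 1 + 1) \<le> A * (n2 - 1)" by (rule mult_le_mono2)
        then show ?thesis by (simp add: algebra_simps)
      qed
      moreover have "2*n1 - y!0 \<le> A" using h unfolding A_def by simp
      ultimately show ?thesis using i1 qr[of "(i,y)"] by (simp add: qv_def rv_def)
    qed
    moreover have "1 \<le> EL2 ns (i,y)" using qr[of "(i,y)"] rb[OF p] by simp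
    ultimately show "EL2 ns (i,y) \<in> {1..card (Dom ns)}" using E cD by simp
  qed
  have "card (EL2 ns ` Dom ns) = card {1..card (Dom ns)}" using card_image[OF inj] by simp
  then have "EL2 ns ` Dom ns = {1..card (Dom ns)}" using sub by (intro card_subset_eq) auto
  then show ?thesis using inj by (simp add: bij_betw_def)
qed

lemma EL_bij:
  assumes d: "length ns \<ge> 2" and n: "\<forall>i<length ns. ns!i \<ge> 2"
  shows "bij_betw (EL ns) (Dom ns) {1..card (Dom ns)}"
proof (cases "length ns = 2")
  case True
  then have "EL ns = EL2 ns" by (simp add: EL_def fun_eq_iff)
  then show ?thesis using EL2_bij[OF True] n True by simp
next
  case False
  then have "EL ns = EL3 ns" by (simp add: EL_def fun_eq_iff)
  then show ?thesis using EL3_bij False d by simp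
qed

lemma shift_bij: "bij_betw (\<lambda>x. N + x) {1..K} {N+1..N+(K::nat)}"
proof -
  have "(\<lambda>x. N + x) ` {1..K} = {N+1..N+K}"
  proof
    show "(\<lambda>x. N + x) ` {1..K} \<subseteq> {N+1..N+K}" by auto
    show "{N+1..N+K} \<subseteq> (\<lambda>x. N + x) ` {1..K}"
    proof
      fix x assume "x \<in> {N+1..N+K}"
      then have "x = N + (x - N)" "x - N \<in> {1..K}" by auto
      then show "x \<in> (\<lambda>x. N + x) ` {1..K}" by blast
    qed
  qed
  then show ?thesis by (simp add: bij_betw_def inj_on_def)
qed

lemma FL_bij:
  assumes d: "length ns \<ge> 2" and n: "\<forall>i<length ns. ns!i \<ge> 2"
  shows "bij_betw (FL ns) (Inl ` grid_verts ns \<union> Inr ` grid_edges ns)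
           {1..card (grid_verts ns) + card (grid_edges ns)}"
proof -
  let ?N = "card (grid_verts ns)"
  let ?E = "grid_edges ns"
  have vb: "bij_betw (VL ns) (grid_verts ns) {1..?N}" unfolding VL_def using d by (intro slab_bij) auto
  have il: "bij_betw Inl (grid_verts ns) (Inl ` grid_verts ns)" by (simp add: bij_betw_def)
  have "FL ns \<circ> Inl = VL ns" by (simp add: FL_def fun_eq_iff)
  then have b1: "bij_betw (FL ns) (Inl ` grid_verts ns) {1..?N}"
    using bij_betw_comp_iff[OF il] vb by metis
  have cD: "card (Dom ns) = card ?E" using emb_bij bij_betw_same_card by blast
  have eb: "bij_betw (\<lambda>e. EL ns (the_inv_into (Dom ns) emb e)) ?E {1..card ?E}"
    using bij_betw_trans[OF bij_betw_the_inv_into[OF emb_bij] EL_bij[OF d n]] cD by (simp add: comp_def)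
  have eb2: "bij_betw (\<lambda>e. ?N + EL ns (the_inv_into (Dom ns) emb e)) ?E {?N+1..?N+card ?E}"
    using bij_betw_trans[OF eb shift_bij] by (simp add: comp_def)
  have ir: "bij_betw Inr ?E (Inr ` ?E)" by (simp add: bij_betw_def)
  have "FL ns \<circ> Inr = (\<lambda>e. ?N + EL ns (the_inv_into (Dom ns) emb e))" by (simp add: FL_def fun_eq_iff)
  then have b2: "bij_betw (FL ns) (Inr ` ?E) {?N+1..?N+card ?E}"
    using bij_betw_comp_iff[OF ir] eb2 by metis
  have "bij_betw (FL ns) (Inl ` grid_verts ns \<union> Inr ` ?E) ({1..?N} \<union> {?N+1..?N+card ?E})"
    by (rule bij_betw_combine[OF b1 b2]) auto
  moreover have "{1..?N} \<union> {?N+1..?N+card ?E} = {1..?N + card ?E}" by auto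
  ultimately show ?thesis by simp
qed

lemma Ci_sub:
  assumes ok: "cube_ok ns a" and i: "i < length ns"
  shows "Ci a i \<subseteq> grid_verts (mi ns i)"
proof
  fix y assume y: "y \<in> Ci a i"
  have yc: "y \<in> CVa a" and yi: "y!i = a!i" using y by (auto simp: Ci_def)
  have yg: "y \<in> grid_verts ns" using CVa_sub[OF ok] yc by blast
  show "y \<in> grid_verts (mi ns i)"
  proof (rule gv_I)
    show "length y = length (mi ns i)" using gv_len[OF yg] by (simp add: mi_def)
    fix j assume "j < length (mi ns i)"
    then have j: "j < length ns" by (simp add: mi_def)
    show "1 \<le> y!j \<and> y!j \<le> mi ns i ! j"
      using gv_nth[OF yg j] ok yi i j by (cases "j = i") (auto simp: mi_def cube_ok_def nth_list_update)
  qed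
qed

lemma sumV:
  assumes ok: "cube_ok ns a" and d: "length ns \<ge> 2"
  shows "2 * (\<Sum>v\<in>CVa a. int (VL ns v)) = int (card (CVa a)) * (int (card (grid_verts ns)) + 1)"
proof -
  have la: "length a = length ns" using ok by (simp add: cube_ok_def)
  show ?thesis unfolding VL_def
  proof (rule slab_sum[where tp = "tg a 0" and tq = "tg a 1"])
    show "0 \<noteq> (1::nat)" "0 < length ns" "1 < length ns" using d by auto
    show "CVa a \<subseteq> grid_verts ns" by (rule CVa_sub[OF ok])
    have l01: "0 < length a" "1 < length a" using d la by auto
    show "bij_betw (tg a 0) (CVa a) (CVa a)" using tg_CVa[OF _ l01(1)] l01 by (intro tg_bij) auto
    show "bij_betw (tg a 1) (CVa a) (CVa a)" using tg_CVa[OF _ l01(2)] l01 by (intro tg_bij) auto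
    show "\<exists>v. tg a 0 y = y[0:=v] \<and> (v = Suc (y!0) \<or> Suc v = y!0)" if "y \<in> CVa a" for y
      using tg_step[OF that l01(1)] by simp
    show "\<exists>v. tg a 1 y = y[1:=v] \<and> (v = Suc (y!1) \<or> Suc v = y!1)" if "y \<in> CVa a" for y
      using tg_step[OF that l01(2)] by simp
  qed
qed

lemma sumE3:
  assumes ok: "cube_ok ns a" and d: "length ns \<ge> 3" and i: "i < length ns"
  shows "2 * (\<Sum>y\<in>Ci a i. int (EL3 ns (i,y))) =
     int (card (Ci a i)) * (2 * int (\<Sum>j<i. Mi ns j) + int (Mi ns i) + 1)"
proof -
  have la: "length a = length ns" using ok by (simp add: cube_ok_def)
  have pq: "pp i \<noteq> qq i" "pp i < length ns" "qq i < length ns" "pp i \<noteq> i" "qq i \<noteq> i"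
    using pq_ok[OF d i] by auto
  have CiC: "Ci a i \<subseteq> CVa a" by (auto simp: Ci_def)
  have S: "2 * (\<Sum>y\<in>Ci a i. int (slab (mi ns i) (pp i) (qq i) y)) =
      int (card (Ci a i)) * (int (card (grid_verts (mi ns i))) + 1)"
  proof (rule slab_sum[where tp = "tg a (pp i)" and tq = "tg a (qq i)"])
    show "pp i \<noteq> qq i" "pp i < length (mi ns i)" "qq i < length (mi ns i)" using pq by (auto simp: mi_def)
    show "Ci a i \<subseteq> grid_verts (mi ns i)" by (rule Ci_sub[OF ok i])
    show "bij_betw (tg a (pp i)) (Ci a i) (Ci a i)" using tg_Ci pq la CiC by (intro tg_bij) auto
    show "bij_betw (tg a (qq i)) (Ci a i) (Ci a i)" using tg_Ci pq la CiC by (intro tg_bij) auto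
    show "\<exists>v. tg a (pp i) y = y[pp i:=v] \<and> (v = Suc (y!pp i) \<or> Suc v = y!pp i)" if "y \<in> Ci a i" for y
      using tg_step[of y a "pp i"] that CiC pq la by auto
    show "\<exists>v. tg a (qq i) y = y[qq i:=v] \<and> (v = Suc (y!qq i) \<or> Suc v = y!qq i)" if "y \<in> Ci a i" for y
      using tg_step[of y a "qq i"] that CiC pq la by auto
  qed
  have "(\<Sum>y\<in>Ci a i. int (EL3 ns (i,y))) =
      (\<Sum>y\<in>Ci a i. int (\<Sum>j<i. Mi ns j) + int (slab (mi ns i) (pp i) (qq i) y))"
    by (simp add: EL3_def)
  also have "\<dots> = int (card (Ci a i)) * int (\<Sum>j<i. Mi ns j) + (\<Sum>y\<in>Ci a i. int (slab (mi ns i) (pp i) (qq i) y))"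
    by (simp add: sum.distrib)
  finally show ?thesis using S by (simp add: Mi_def algebra_simps)
qed



lemma sum_two: "p \<noteq> q \<Longrightarrow> (\<Sum>y\<in>{p,q}. f y) = f p + (f q :: 'b :: comm_monoid_add)" by simp

lemma Ci2:
  assumes ok: "cube_ok ns a" and d2: "length ns = 2" and i: "i < 2"
  shows "Ci a i = {a, a[1 - i := Suc (a!(1-i))]}"
proof -
  have la: "length a = 2" using ok d2 by (simp add: cube_ok_def)
  have j: "1 - i < 2" "1 - i \<noteq> i" using i by arith+
  show ?thesis
  proof
    show "Ci a i \<subseteq> {a, a[1 - i := Suc (a!(1-i))]}"
    proof
      fix y assume y: "y \<in> Ci a i"
      have ly: "length y = 2" and yi: "y!i = a!i" and yj: "y!(1-i) = a!(1-i) \<or> y!(1-i) = Suc (a!(1-i))"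
        using y la j by (auto simp: Ci_def CVa_def)
      have alli: "k < 2 \<Longrightarrow> k = i \<or> k = 1 - i" for k using i by auto
      show "y \<in> {a, a[1 - i := Suc (a!(1-i))]}"
      proof (cases "y!(1-i) = a!(1-i)")
        case True
        then have "y = a" using yi ly la alli by (intro nth_equalityI) auto
        then show ?thesis by simp
      next
        case False
        then have "y = a[1 - i := Suc (a!(1-i))]" using yi yj ly la alli j
          by (intro nth_equalityI) (auto simp: nth_list_update)
        then show ?thesis by simp
      qed
    qed
    show "{a, a[1 - i := Suc (a!(1-i))]} \<subseteq> Ci a i"
      using la j i by (auto simp: Ci_def CVa_def nth_list_update)
  qed
qed

lemma sumE2:
  assumes ok: "cube_ok ns a" and d2: "length ns = 2"
  shows "(\<Sum>y\<in>Ci a 0. EL2 ns (0,y)) + (\<Sum>y\<in>Ci a 1. EL2 ns (1,y)) =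
         (2 * ns!0 - 1) * (2 * ns!1 - 3) + 4 * ns!0 - 1"
proof -
  have la: "length a = 2" using ok d2 by (simp add: cube_ok_def)
  have b: "1 \<le> a!0" "Suc (a!0) \<le> ns!0" "1 \<le> a!1" "Suc (a!1) \<le> ns!1" using ok d2 by (auto simp: cube_ok_def)
  have C0: "Ci a 0 = {a, a[1 := Suc (a!1)]}" using Ci2[OF ok d2, of 0] by simp
  have C1: "Ci a 1 = {a, a[0 := Suc (a!0)]}" using Ci2[OF ok d2, of 1] by simp
  have n0: "a \<noteq> a[1 := Suc (a!1)]"
  proof
    assume "a = a[1 := Suc (a!1)]"
    then have "a!1 = a[1 := Suc (a!1)] ! 1" by simp
    also have "\<dots> = Suc (a!1)" using la by simp
    finally show False by simp
  qed
  have n1: "a \<noteq> a[0 := Suc (a!0)]"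
  proof
    assume "a = a[0 := Suc (a!0)]"
    then have "a!0 = a[0 := Suc (a!0)] ! 0" by simp
    also have "\<dots> = Suc (a!0)" using la by simp
    finally show False by simp
  qed
  define c where "c = a!1 - 1"
  define e where "e = ns!1 - Suc (Suc c)"
  define f where "f = ns!0 - Suc (a!0)"
  have cef: "a!1 = Suc c" "ns!1 = Suc (Suc c) + e" "ns!0 = Suc (a!0) + f"
    using b unfolding c_def e_def f_def by arith+
  define b0 where "b0 = a!0"
  have "(\<Sum>y\<in>Ci a 0. EL2 ns (0,y)) + (\<Sum>y\<in>Ci a 1. EL2 ns (1,y)) =
     EL2 ns (0,a) + EL2 ns (0, a[1 := Suc (a!1)]) + (EL2 ns (1,a) + EL2 ns (1, a[0 := Suc (a!0)]))"
    unfolding C0 C1 using n0 n1 by simp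
  also have "\<dots> = (2 * ns!0 - 1) * (2 * ns!1 - 3) + 4 * ns!0 - 1"
    using la cef unfolding EL2_def by (simp add: nth_list_update algebra_simps b0_def)
  finally show ?thesis .
qed

lemma Ci_fin: "cube_ok ns a \<Longrightarrow> finite (Ci a i)"
  using CVa_sub gv_finite finite_subset unfolding Ci_def by (metis (no_types, lifting) mem_Collect_eq subsetI)

lemma sumE:
  assumes ok: "cube_ok ns a"
  shows "(\<Sum>e\<in>cubeE ns a. FL ns (Inr e)) =
         (\<Sum>i<length ns. \<Sum>y\<in>Ci a i. card (grid_verts ns) + EL ns (i,y))"
proof -
  let ?S = "Sigma {..<length ns} (Ci a)"
  have sub: "?S \<subseteq> Dom ns" by (rule Sig_Dom[OF ok])
  have injD: "inj_on emb (Dom ns)" using emb_bij by (simp add: bij_betw_def)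
  have inj: "inj_on emb ?S" using inj_on_subset[OF injD sub] .
  have "(\<Sum>e\<in>cubeE ns a. FL ns (Inr e)) = (\<Sum>p\<in>?S. FL ns (Inr (emb p)))"
    unfolding cubeE_emb[OF ok] using sum.reindex[OF inj, of "\<lambda>e. FL ns (Inr e)"] by (simp add: comp_def)
  also have "\<dots> = (\<Sum>p\<in>?S. card (grid_verts ns) + EL ns p)"
  proof (rule sum.cong)
    fix p assume "p \<in> ?S"
    then have "p \<in> Dom ns" using sub by blast
    then show "FL ns (Inr (emb p)) = card (grid_verts ns) + EL ns p"
      by (simp add: FL_def the_inv_into_f_f[OF injD])
  qed simp
  also have "\<dots> = (\<Sum>i<length ns. \<Sum>y\<in>Ci a i. card (grid_verts ns) + EL ns (i,y))"
    using sum.Sigma[of "{..<length ns}" "Ci a" "\<lambda>i y. card (grid_verts ns) + EL ns (i,y)"] Ci_fin[OF ok]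
    by (simp add: split_def)
  finally show ?thesis .
qed

definition Cset :: "nat list \<Rightarrow> nat \<Rightarrow> nat list set" where
  "Cset ns i = {z \<in> grid_verts (replicate (length ns) 2). z!i = 1}"

definition Kc :: "nat list \<Rightarrow> int" where
  "Kc ns = int (card (grid_verts (replicate (length ns) 2))) * (int (card (grid_verts ns)) + 1)
     + 2 * int (card (grid_verts ns)) * (\<Sum>i<length ns. int (card (Cset ns i)))
     + (if length ns = 2 then 2 * int ((2 * ns!0 - 1) * (2 * ns!1 - 3) + 4 * ns!0 - 1)
        else (\<Sum>i<length ns. int (card (Cset ns i)) * (2 * int (\<Sum>j<i. Mi ns j) + int (Mi ns i) + 1)))"

lemma total_eq:
  assumes ok: "cube_ok ns a" and d: "length ns \<ge> 2"
  shows "2 * int ((\<Sum>v\<in>CVa a. FL ns (Inl v)) + (\<Sum>e\<in>cubeE ns a. FL ns (Inr e))) = Kc ns"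
proof -
  let ?N = "card (grid_verts ns)"
  have V: "2 * int (\<Sum>v\<in>CVa a. FL ns (Inl v)) =
      int (card (grid_verts (replicate (length ns) 2))) * (int ?N + 1)"
  proof -
    have "2 * int (\<Sum>v\<in>CVa a. FL ns (Inl v)) = 2 * (\<Sum>v\<in>CVa a. int (VL ns v))"
      by (simp add: FL_def)
    also have "\<dots> = int (card (CVa a)) * (int ?N + 1)" by (rule sumV[OF ok d])
    finally show ?thesis using card_CVa[OF ok] by simp
  qed
  have cC: "card (Ci a i) = card (Cset ns i)" if "i < length ns" for i
    using card_Ci[OF ok that] by (simp add: Cset_def)
  have E1: "int (\<Sum>e\<in>cubeE ns a. FL ns (Inr e)) =
      (\<Sum>i<length ns. int (card (Cset ns i)) * int ?N + (\<Sum>y\<in>Ci a i. int (EL ns (i,y))))"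
  proof -
    have "int (\<Sum>e\<in>cubeE ns a. FL ns (Inr e)) =
        (\<Sum>i<length ns. \<Sum>y\<in>Ci a i. int ?N + int (EL ns (i,y)))"
      unfolding sumE[OF ok] by simp
    also have "\<dots> = (\<Sum>i<length ns. int (card (Ci a i)) * int ?N + (\<Sum>y\<in>Ci a i. int (EL ns (i,y))))"
      by (simp add: sum.distrib)
    also have "\<dots> = (\<Sum>i<length ns. int (card (Cset ns i)) * int ?N + (\<Sum>y\<in>Ci a i. int (EL ns (i,y))))"
      using cC by (intro sum.cong) auto
    finally show ?thesis .
  qed
  have E2: "2 * (\<Sum>i<length ns. (\<Sum>y\<in>Ci a i. int (EL ns (i,y)))) =
     (if length ns = 2 then 2 * int ((2 * ns!0 - 1) * (2 * ns!1 - 3) + 4 * ns!0 - 1)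
        else (\<Sum>i<length ns. int (card (Cset ns i)) * (2 * int (\<Sum>j<i. Mi ns j) + int (Mi ns i) + 1)))"
  proof (cases "length ns = 2")
    case True
    have "(\<Sum>i<length ns. (\<Sum>y\<in>Ci a i. int (EL ns (i,y)))) =
        int ((\<Sum>y\<in>Ci a 0. EL2 ns (0,y)) + (\<Sum>y\<in>Ci a 1. EL2 ns (1,y)))"
      using True by (simp add: EL_def numeral_2_eq_2)
    moreover have "int ((\<Sum>y\<in>Ci a 0. EL2 ns (0,y)) + (\<Sum>y\<in>Ci a 1. EL2 ns (1,y))) =
        int ((2 * ns!0 - 1) * (2 * ns!1 - 3) + 4 * ns!0 - 1)" using sumE2[OF ok True] by simp
    ultimately show ?thesis using True by simp
  next
    case False
    then have d3: "length ns \<ge> 3" using d by simp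
    have "2 * (\<Sum>i<length ns. (\<Sum>y\<in>Ci a i. int (EL ns (i,y)))) =
        (\<Sum>i<length ns. 2 * (\<Sum>y\<in>Ci a i. int (EL3 ns (i,y))))"
      using False by (simp add: EL_def sum_distrib_left)
    also have "\<dots> = (\<Sum>i<length ns. int (card (Cset ns i)) * (2 * int (\<Sum>j<i. Mi ns j) + int (Mi ns i) + 1))"
      using sumE3[OF ok d3] cC by (intro sum.cong) auto
    finally show ?thesis using False by simp
  qed
  have "2 * int ((\<Sum>v\<in>CVa a. FL ns (Inl v)) + (\<Sum>e\<in>cubeE ns a. FL ns (Inr e))) =
     2 * int (\<Sum>v\<in>CVa a. FL ns (Inl v)) + 2 * int (\<Sum>e\<in>cubeE ns a. FL ns (Inr e))" by simp
  also have "\<dots> = Kc ns"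
    unfolding V E1 Kc_def using E2 by (simp add: sum.distrib sum_distrib_left algebra_simps)
  finally show ?thesis .
qed



lemma half_nat: "2 * int x = K \<Longrightarrow> x = nat (K div 2)" by auto

theorem corollary2:
  fixes ns :: "nat list"
  assumes "length ns \<ge> 2"
    and "\<forall>i j. i \<le> j \<and> j < length ns \<longrightarrow> ns ! j \<le> ns ! i"
    and "\<forall>i<length ns. ns ! i \<ge> 2"
  shows "H_supermagic (grid ns) (cube (length ns))"
proof -
  have d: "length ns \<ge> 2" and n: "\<forall>i<length ns. ns!i \<ge> 2" using assms by auto
  have vg: "verts (grid ns) = grid_verts ns" "edges (grid ns) = grid_edges ns"
    by (simp_all add: grid_def verts_def edges_def)
  have cov: "H_covering (grid ns) (cube (length ns))"
    unfolding H_covering_def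
  proof
    fix e assume "e \<in> edges (grid ns)"
    then have e: "e \<in> grid_edges ns" by (simp add: vg)
    then have "e \<in> emb ` Dom ns" using emb_bij by (simp add: bij_betw_def)
    then obtain i y where p: "(i,y) \<in> Dom ns" "e = emb (i,y)" by auto
    have g: "y \<in> grid_verts ns" "y[i := Suc (y!i)] \<in> grid_verts ns" "i < length ns"
      using Dom_gv[OF p(1)] by auto
    have ly: "length y = length ns" using gv_len[OF g(1)] .
    have si: "Suc (y!i) \<le> ns!i" using gv_nth[OF g(2) g(3)] ly g(3) by simp
    define a where "a = map (\<lambda>j. if j = i then y!i else if y!j < ns!j then y!j else y!j - 1) [0..<length ns]"
    have la: "length a = length ns" by (simp add: a_def)
    have aa: "\<forall>j<length ns. 1 \<le> a!j \<and> Suc (a!j) \<le> ns!j"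
    proof (intro allI impI)
      fix j assume j: "j < length ns"
      have "1 \<le> y!j" "y!j \<le> ns!j" "2 \<le> ns!j" using gv_nth[OF g(1) j] n j by auto
      then show "1 \<le> a!j \<and> Suc (a!j) \<le> ns!j" using si j by (auto simp: a_def)
    qed
    have ok: "cube_ok ns a" unfolding cube_ok_def using la aa by simp
    have yC: "y \<in> CVa a" unfolding CVa_def using ly la by (auto simp: a_def)
    have zC: "y[i := Suc (y!i)] \<in> CVa a" unfolding CVa_def using ly la g(3) by (auto simp: a_def nth_list_update)
    have "e \<in> cubeE ns a" using e p yC zC by (auto simp: cubeE_def emb_def)
    moreover have "(CVa a, cubeE ns a) \<in> copies (grid ns) (cube (length ns))" by (rule cube_copy[OF ok])
    ultimately show "\<exists>S\<in>copies (grid ns) (cube (length ns)). e \<in> edges S"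
      by (intro bexI[of _ "(CVa a, cubeE ns a)"]) (auto simp: edges_def)
  qed
  have ml: "magic_labelling (grid ns) (cube (length ns)) (FL ns)"
    unfolding magic_labelling_def
  proof
    show "bij_betw (FL ns) (Inl ` verts (grid ns) \<union> Inr ` edges (grid ns))
        {1..card (verts (grid ns)) + card (edges (grid ns))}" unfolding vg by (rule FL_bij[OF d n])
    show "\<exists>c. \<forall>S\<in>copies (grid ns) (cube (length ns)).
        (\<Sum>v\<in>verts S. FL ns (Inl v)) + (\<Sum>e\<in>edges S. FL ns (Inr e)) = c"
    proof (intro exI ballI)
      fix S assume S: "S \<in> copies (grid ns) (cube (length ns))"
      obtain a where a: "cube_ok ns a" "verts S = CVa a" "edges S = cubeE ns a"
        using copies_char[OF S] by blast
      have "2 * int ((\<Sum>v\<in>verts S. FL ns (Inl v)) + (\<Sum>e\<in>edges S. FL ns (Inr e))) = Kc ns"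
        unfolding a(2,3) by (rule total_eq[OF a(1) d])
      then show "(\<Sum>v\<in>verts S. FL ns (Inl v)) + (\<Sum>e\<in>edges S. FL ns (Inr e)) = nat (Kc ns div 2)"
        using half_nat by blast
    qed
  qed
  have im: "FL ns ` Inl ` verts (grid ns) = {1..card (verts (grid ns))}"
  proof -
    have "FL ns ` Inl ` verts (grid ns) = VL ns ` grid_verts ns"
      unfolding vg image_image by (simp add: FL_def)
    also have "\<dots> = {1..card (grid_verts ns)}"
    proof -
      have "bij_betw (slab ns 0 1) (grid_verts ns) {1..card (grid_verts ns)}" using d by (intro slab_bij) auto
      then show ?thesis unfolding VL_def by (rule bij_betw_imp_surj_on)
    qed
    finally show ?thesis by (simp add: vg)
  qed
  show ?thesis unfolding H_supermagic_def using cov ml im by blast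
qed


end
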